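(* Let $\mu$ be a positive Radon measure on $\mathbb{R}^d$ satisfying the growth condition with constants $C_0>0$, $n\in(0,d]$, let $1\le q\le p\le\infty$, and let $k_1,k_2>1$. Then $\mathcal{C}^p_q(k_1,\mu)$ and $\mathcal{C}^p_q(k_2,\mu)$ coincide as sets and their norms are equivalent: there is a constant $C\ge1$ such that for all $f\in L^1_{loc}(\mu)$, \[ C^{-1}\|f:\mathcal{C}^p_q(k_2,\mu)\|\le \|f:\mathcal{C}^p_q(k_1,\mu)\|\le C\,\|f:\mathcal{C}^p_q(k_2,\mu)\|. \]
   Context: Growth condition: $\mu(Q(x,l)) \le C_0\,l^n$ for all $x \in \operatorname{supp}(\mu)$ and $l>0$. Cubes are closed with sides parallel to the axes; $Q(x,l)$ is the cube centered at $x$ of side length $l$; $z_Q$, $\ell(Q)$ are center and side length; $\rho Q$ is concentric with $Q$ of side length $\rho\ell(Q)$. $\mathcal{Q}(\mu)$ is the set of cubes of positive $\mu$-measure (including $\mathbb{R}^d$ if $\mu$ is finite). $Q\in\mathcal{Q}(\mu)$ is doubling if $\mu(2Q)\le 2^{d+1}\mu(Q)$; $\mathcal{Q}(\mu,2)$ is the set of doubling cubes. For $Q\in\mathcal{Q}(\mu)$, $Q^*$ is the smallest doubling cube of the form $2^jQ$, $j\ge 0$. For $Q\subset R$, $Q\in\mathcal{Q}(\mu)$, let $Q_R$ be the smallest cube concentric with $Q$ containing $R$, $\delta(Q,R):=\int_{\ell(Q)}^{\ell(Q_R)} \mu(Q(z_Q,l))\,l^{-n}\,\frac{dl}{l}$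 and $K_{Q,R}:=1+\delta(Q,R)$. $m_Q(f):=\mu(Q)^{-1}\int_Q f\,d\mu$. For $k>1$, \[ \|f : \mathcal{C}^p_q(k,\mu)\| := \sup_{Q \in \mathcal{Q}(\mu)} \mu(kQ)^{\frac{1}{p}-\frac{1}{q}} \Big(\int_Q|f(x)-m_{Q^*}(f)|^q\,d\mu(x)\Big)^{\frac{1}{q}} + \sup_{Q \subset R,\ Q,R \in \mathcal{Q}(\mu,2)} \mu(Q)^{\frac{1}{p}} \frac{|m_Q(f)-m_R(f)|}{K_{Q,R}}, \] and $\mathcal{C}^p_q(k,\mu)$ is the set of $f\in L^1_{loc}(\mu)$ for which this is finite. *)

theory Defs
  imports "HOL-Analysis.Analysis" "HOL-Probability.Essential_Supremum"
begin

text \<open>Cubes: None stands for the whole space R^d, Some (z,l) for the closed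
  axis-parallel cube with centre z and side length l.\<close>
type_synonym 'a cube = "('a \<times> real) option"

definition cube_set :: "'a::euclidean_space cube \<Rightarrow> 'a set" where
  "cube_set Q = (case Q of None \<Rightarrow> UNIV
     | Some (z, l) \<Rightarrow> cbox (z - (l/2) *\<^sub>R One) (z + (l/2) *\<^sub>R One))"

definition Qc :: "'a::euclidean_space \<Rightarrow> real \<Rightarrow> 'a set" where
  "Qc x l = cube_set (Some (x, l))"

definition dilate :: "real \<Rightarrow> 'a cube \<Rightarrow> 'a cube" where
  "dilate \<rho> Q = (case Q of None \<Rightarrow> None | Some (z, l) \<Rightarrow> Some (z, \<rho> * l))"

definition support :: "'a::euclidean_space measure \<Rightarrow> 'a set" where
  "support M = {x. \<forall>r>0. emeasure M (ball x r) > 0}"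

definition cubes_pos :: "'a::euclidean_space measure \<Rightarrow> 'a cube set" where
  "cubes_pos M = {Q. (case Q of None \<Rightarrow> emeasure M UNIV < \<infinity> | Some (z, l) \<Rightarrow> l > 0)
                     \<and> emeasure M (cube_set Q) > 0}"

definition doubling :: "'a::euclidean_space measure \<Rightarrow> 'a cube \<Rightarrow> bool" where
  "doubling M Q \<longleftrightarrow> Q \<in> cubes_pos M \<and>
     emeasure M (cube_set (dilate 2 Q)) \<le> 2 ^ (DIM('a) + 1) * emeasure M (cube_set Q)"

definition cubes_doubling :: "'a::euclidean_space measure \<Rightarrow> 'a cube set" where
  "cubes_doubling M = {Q. doubling M Q}"

definition star :: "'a::euclidean_space measure \<Rightarrow> 'a cube \<Rightarrow> 'a cube" where
  "star M Q = dilate (2 ^ (LEAST j::nat. doubling M (dilate (2 ^ j) Q))) Q"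

definition mean :: "'a::euclidean_space measure \<Rightarrow> ('a \<Rightarrow> real) \<Rightarrow> 'a cube \<Rightarrow> real" where
  "mean M f Q = (LINT x:cube_set Q|M. f x) / measure M (cube_set Q)"

definition locally_integrable :: "'a::euclidean_space measure \<Rightarrow> ('a \<Rightarrow> real) \<Rightarrow> bool" where
  "locally_integrable M f \<longleftrightarrow> (\<forall>K. compact K \<longrightarrow> set_integrable M K f)"

definition einv :: "ereal \<Rightarrow> real" where
  "einv p = (if p = \<infinity> then 0 else 1 / real_of_ereal p)"

definition enn_powr :: "ennreal \<Rightarrow> real \<Rightarrow> ennreal" where
  "enn_powr x a = (if x = top then top else ennreal (enn2real x powr a))"

definition Lq_on :: "'a::euclidean_space measure \<Rightarrow> ereal \<Rightarrow> 'a set \<Rightarrow> ('a \<Rightarrow> real) \<Rightarrow> ennreal" where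
  "Lq_on M q A g = (if q = \<infinity> then e2ennreal (esssup M (\<lambda>x. ereal (indicator A x * \<bar>g x\<bar>)))
     else enn_powr (\<integral>\<^sup>+x\<in>A. ennreal (\<bar>g x\<bar> powr real_of_ereal q) \<partial>M) (1 / real_of_ereal q))"

definition side_QR :: "'a::euclidean_space cube \<Rightarrow> 'a cube \<Rightarrow> ereal" where
  "side_QR Q R = (case Q of None \<Rightarrow> \<infinity> | Some (z, l) \<Rightarrow>
     (case R of None \<Rightarrow> \<infinity> | Some _ \<Rightarrow> ereal (Inf {s. s > 0 \<and> cube_set R \<subseteq> Qc z s})))"

definition delta :: "'a::euclidean_space measure \<Rightarrow> real \<Rightarrow> 'a cube \<Rightarrow> 'a cube \<Rightarrow> ennreal" where
  "delta M n Q R = (case Q of None \<Rightarrow> 0 | Some (z, l) \<Rightarrow>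
     \<integral>\<^sup>+s. indicator {s. ereal l \<le> ereal s \<and> ereal s \<le> side_QR Q R} s *
        ennreal (measure M (Qc z s) * s powr (- n) / s) \<partial>lborel)"

definition K_QR :: "'a::euclidean_space measure \<Rightarrow> real \<Rightarrow> 'a cube \<Rightarrow> 'a cube \<Rightarrow> ennreal" where
  "K_QR M n Q R = 1 + delta M n Q R"

definition Cnorm :: "'a::euclidean_space measure \<Rightarrow> real \<Rightarrow> ereal \<Rightarrow> ereal \<Rightarrow> real
                     \<Rightarrow> ('a \<Rightarrow> real) \<Rightarrow> ennreal" where
  "Cnorm M n p q k f =
     (SUP Q\<in>cubes_pos M.
        ennreal (measure M (cube_set (dilate k Q)) powr (einv p - einv q)) *
        Lq_on M q (cube_set Q) (\<lambda>x. f x - mean M f (star M Q)))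
   + (SUP QR\<in>{(Q, R). Q \<in> cubes_doubling M \<and> R \<in> cubes_doubling M \<and> cube_set Q \<subseteq> cube_set R}.
        ennreal (measure M (cube_set (fst QR)) powr einv p) *
        ennreal \<bar>mean M f (fst QR) - mean M f (snd QR)\<bar> / K_QR M n (fst QR) (snd QR))"

end

theory Submission
  imports Defs
begin


lemma Qc_eq: "Qc z l = cbox (z - (l/2) *\<^sub>R One) (z + (l/2) *\<^sub>R One)"
  by (simp add: Qc_def cube_set_def)

lemma mem_Qc: "x \<in> Qc (z::'a::euclidean_space) l \<longleftrightarrow> (\<forall>b\<in>Basis. \<bar>(x - z) \<bullet> b\<bar> \<le> l/2)"
  unfolding Qc_eq mem_box
  by (intro ball_cong refl) (auto simp: inner_diff_left inner_add_left split: abs_split)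

lemma Qc_subset:
  assumes "\<And>b. b \<in> Basis \<Longrightarrow> \<bar>(y - c) \<bullet> b\<bar> + s/2 \<le> s'/2"
  shows "Qc (y::'a::euclidean_space) s \<subseteq> Qc c s'"
proof
  fix x assume "x \<in> Qc y s"
  then have h: "\<And>b. b\<in>Basis \<Longrightarrow> \<bar>(x - y) \<bullet> b\<bar> \<le> s/2" by (auto simp: mem_Qc)
  show "x \<in> Qc c s'" unfolding mem_Qc
  proof
    fix b :: 'a assume b: "b \<in> Basis"
    have "(x - c) \<bullet> b = (x - y) \<bullet> b + (y - c) \<bullet> b" by (simp add: inner_diff_left)
    then show "\<bar>(x - c) \<bullet> b\<bar> \<le> s'/2" using h[OF b] assms[OF b] by linarith
  qed
qed

lemma compact_Qc: "compact (Qc z l)" by (simp add: Qc_eq)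
lemma closed_Qc: "closed (Qc z l)" by (simp add: Qc_eq closed_cbox)

lemma Qc_mono: "s \<le> s' \<Longrightarrow> Qc z s \<subseteq> Qc z s'"
  by (rule Qc_subset) auto

lemma cube_set_Some: "cube_set (Some (z,l)) = Qc z l" by (simp add: Qc_def)



locale setting =
  fixes M :: "'a::euclidean_space measure" and C0 n :: real
  assumes sets_M: "sets M = sets borel"
    and radon: "\<And>K. compact K \<Longrightarrow> emeasure M K < \<infinity>"
    and C0_pos: "C0 > 0"
    and n_pos: "n > 0" and n_le: "n \<le> real DIM('a)"
    and growth: "\<And>x l. x \<in> support M \<Longrightarrow> l > 0 \<Longrightarrow> emeasure M (Qc x l) \<le> ennreal (C0 * l powr n)"
begin

lemma sets_Qc[measurable]: "Qc z l \<in> sets M"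
  using closed_Qc sets_M by (metis borel_closed)

lemma space_M: "space M = UNIV"
  using sets_M by (metis sets_eq_imp_space_eq space_borel)

lemma compact_sets: "compact K \<Longrightarrow> K \<in> sets M"
  using sets_M by (metis borel_compact)

lemma emeasure_Qc_fin: "emeasure M (Qc z l) < \<infinity>"
  by (rule radon[OF compact_Qc])

lemma emeasure_Qc: "emeasure M (Qc z l) = ennreal (measure M (Qc z l))"
  using emeasure_Qc_fin[of z l] by (simp add: emeasure_eq_ennreal_measure less_top)

lemma measure_Qc_mono: "Qc z l \<subseteq> Qc z' l' \<Longrightarrow> measure M (Qc z l) \<le> measure M (Qc z' l')"
  using emeasure_Qc_fin[of z' l'] by (intro measure_mono_fmeasurable) (auto simp: fmeasurable_def)

lemma null_off_support:
  assumes K: "compact K" and disj: "K \<inter> support M = {}"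
  shows "emeasure M K = 0"
proof -
  have "\<forall>x\<in>K. \<exists>r>0. emeasure M (ball x r) = 0"
  proof
    fix x assume "x \<in> K"
    then have "x \<notin> support M" using disj by auto
    then obtain r where "r > 0" "\<not> emeasure M (ball x r) > 0" by (auto simp: support_def)
    then show "\<exists>r>0. emeasure M (ball x r) = 0" by (auto simp: not_less)
  qed
  then obtain r where r: "\<And>x. x \<in> K \<Longrightarrow> r x > 0 \<and> emeasure M (ball x (r x)) = 0"
    by metis
  have "K \<subseteq> (\<Union>x\<in>K. ball x (r x))" using r by auto
  then obtain C' where C': "C' \<subseteq> K" "finite C'" "K \<subseteq> (\<Union>c\<in>C'. ball c (r c))"
    using compactE_image[OF K, of K "\<lambda>x. ball x (r x)"] by auto
  have "emeasure M K \<le> emeasure M (\<Union>c\<in>C'. ball c (r c))"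
    using C' by (intro emeasure_mono) (auto simp: sets_M)
  also have "\<dots> \<le> (\<Sum>c\<in>C'. emeasure M (ball c (r c)))"
    using C' by (intro emeasure_subadditive_finite) (auto simp: sets_M)
  also have "\<dots> = 0" using C' r by (intro sum.neutral) auto
  finally show ?thesis by simp
qed

lemma growth_any:
  assumes l: "l > 0"
  shows "measure M (Qc y l) \<le> C0 * (2 * l) powr n"
proof (cases "emeasure M (Qc y l) = 0")
  case True
  then show ?thesis using C0_pos by (simp add: measure_def)
next
  case False
  then obtain x where x: "x \<in> Qc y l" "x \<in> support M"
    using null_off_support[OF compact_Qc] by blast
  have "Qc y l \<subseteq> Qc x (2*l)"
  proof (rule Qc_subset)
    fix b :: 'a assume b: "b \<in> Basis"
    have "\<bar>(y - x) \<bullet> b\<bar> = \<bar>(x - y) \<bullet> b\<bar>" by (simp add: inner_diff_left)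
    then show "\<bar>(y - x) \<bullet> b\<bar> + l / 2 \<le> 2 * l / 2" using x(1) b by (auto simp: mem_Qc)
  qed
  then have "emeasure M (Qc y l) \<le> emeasure M (Qc x (2*l))" by (intro emeasure_mono) auto
  also have "\<dots> \<le> ennreal (C0 * (2*l) powr n)" using growth[OF x(2)] l by simp
  finally show ?thesis using C0_pos
    by (simp add: emeasure_Qc ennreal_le_iff)
qed

end


lemma pow2_powr: "x \<ge> 0 \<Longrightarrow> ((2::real)^i * x) powr a = (2 powr a)^i * x powr a"
proof -
  assume "x \<ge> 0"
  have "((2::real)^i) powr a = (2 powr a)^i"
    by (simp add: powr_power powr_realpow[symmetric] powr_powr mult.commute)
  then show ?thesis by (simp add: powr_mult)
qed

lemma dilate_Some: "dilate r (Some (c,b)) = Some (c, r*b)" by (simp add: dilate_def)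

lemma cube_set_dilate: "cube_set (dilate r (Some (c,b))) = Qc c (r*b)"
  by (simp add: dilate_def Qc_def)

context setting begin

lemma cubes_pos_Some: "Some (c,b) \<in> cubes_pos M \<longleftrightarrow> b > 0 \<and> emeasure M (Qc c b) > 0"
  by (simp add: cubes_pos_def Qc_def)

lemma doubling_Some: "doubling M (Some (c,b)) \<longleftrightarrow> Some (c,b) \<in> cubes_pos M \<and>
    measure M (Qc c (2*b)) \<le> 2^(DIM('a)+1) * measure M (Qc c b)"
proof -
  have e: "(2^(DIM('a)+1)::ennreal) * ennreal (measure M (Qc c b)) = ennreal (2^(DIM('a)+1) * measure M (Qc c b))"
    by (simp add: ennreal_mult ennreal_power[symmetric])
  have "emeasure M (Qc c (2*b)) \<le> 2^(DIM('a)+1) * emeasure M (Qc c b) \<longleftrightarrow>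
        measure M (Qc c (2*b)) \<le> 2^(DIM('a)+1) * measure M (Qc c b)"
    by (simp only: emeasure_Qc e ennreal_le_iff zero_le_mult_iff measure_nonneg zero_le_power) simp
  then show ?thesis by (simp only: doubling_def dilate_Some cube_set_Some)
qed

lemma cubes_pos_mono:
  assumes "Some (c,b) \<in> cubes_pos M" "b \<le> b'"
  shows "Some (c,b') \<in> cubes_pos M"
proof -
  have "emeasure M (Qc c b) \<le> emeasure M (Qc c b')"
    using assms by (intro emeasure_mono Qc_mono) auto
  then show ?thesis using assms by (auto simp: cubes_pos_Some)
qed

lemma measure_pos: "Some (c,b) \<in> cubes_pos M \<Longrightarrow> measure M (Qc c b) > 0"
  by (auto simp: cubes_pos_Some emeasure_Qc)

definition sx :: "'a cube \<Rightarrow> nat" where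
  "sx P = (LEAST j. doubling M (dilate (2^j) P))"

lemma star_Some: "star M (Some (c,b)) = Some (c, 2^(sx (Some (c,b))) * b)"
  by (simp add: star_def sx_def dilate_def)

lemma nondoubling_step:
  assumes P: "Some (c,b) \<in> cubes_pos M" and nd: "\<not> doubling M (Some (c, 2^i*b))"
  shows "2^(DIM('a)+1) * measure M (Qc c (2^i*b)) \<le> measure M (Qc c (2^(Suc i)*b))"
proof -
  have "Some (c, 2^i*b) \<in> cubes_pos M"
    using P by (rule cubes_pos_mono) (use P in \<open>auto simp: cubes_pos_Some\<close>)
  then show ?thesis using nd by (auto simp: doubling_Some mult.assoc)
qed

lemma star_exists:
  assumes P: "Some (c,b) \<in> cubes_pos M"
  shows "\<exists>j. doubling M (dilate (2^j) (Some (c,b)))"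
proof (rule ccontr)
  assume "\<not> ?thesis"
  then have nd: "\<And>j. \<not> doubling M (Some (c, 2^j*b))" by (auto simp: dilate_Some)
  have b: "b > 0" using P by (auto simp: cubes_pos_Some)
  define m0 where "m0 = measure M (Qc c b)"
  have m0: "m0 > 0" using measure_pos[OF P] by (simp add: m0_def)
  have low: "(2^(DIM('a)+1))^j * m0 \<le> measure M (Qc c (2^j*b))" for j
  proof (induction j)
    case 0 then show ?case by (simp add: m0_def)
  next
    case (Suc j)
    have "(2^(DIM('a)+1))^Suc j * m0 = 2^(DIM('a)+1) * ((2^(DIM('a)+1))^j * m0)" by simp
    also have "\<dots> \<le> 2^(DIM('a)+1) * measure M (Qc c (2^j*b))"
      using Suc by (intro mult_left_mono) auto
    also have "\<dots> \<le> measure M (Qc c (2^(Suc j)*b))" by (rule nondoubling_step[OF P nd])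
    finally show ?case .
  qed
  have up: "measure M (Qc c (2^j*b)) \<le> C0 * (2*b) powr n * (2^DIM('a))^j" for j
  proof -
    have "measure M (Qc c (2^j*b)) \<le> C0 * (2 * (2^j*b)) powr n"
      using b by (intro growth_any) auto
    also have "(2 * (2^j*b)) powr n = (2 powr n)^j * (2*b) powr n"
      using pow2_powr[of "2*b" j n] b by (simp add: algebra_simps)
    also have "(2 powr n :: real)^j \<le> (2^DIM('a))^j"
    proof (intro power_mono)
      have "(2::real) powr n \<le> 2 powr (real DIM('a))" using n_le by (intro powr_mono) auto
      then show "(2::real) powr n \<le> 2^DIM('a)" by (simp add: powr_realpow)
    qed auto
    then have "C0 * ((2 powr n)^j * (2*b) powr n) \<le> C0 * ((2^DIM('a))^j * (2*b) powr n)"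
      using C0_pos by (intro mult_left_mono mult_right_mono) auto
    finally show ?thesis by (simp add: algebra_simps)
  qed
  define K where "K = C0 * (2*b) powr n / m0"
  obtain j :: nat where j: "K < 2^j" using real_arch_pow[of 2 K] by auto
  have "(2^(DIM('a)+1))^j * m0 \<le> C0 * (2*b) powr n * (2^DIM('a))^j"
    using low[of j] up[of j] by linarith
  then have "(2^DIM('a))^j * (2^j * m0) \<le> (2^DIM('a))^j * (C0 * (2*b) powr n)"
    by (simp add: power_add power_mult_distrib algebra_simps)
  then have "2^j * m0 \<le> C0 * (2*b) powr n" by (simp add: mult_le_cancel_left_pos)
  then have "2^j \<le> K" using m0 by (simp add: K_def pos_le_divide_eq)
  then show False using j by simp
qed

lemma star_doubling:
  assumes P: "Some (c,b) \<in> cubes_pos M"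
  shows "doubling M (Some (c, 2^(sx (Some (c,b))) * b))"
  using LeastI_ex[OF star_exists[OF P]] by (simp add: sx_def dilate_Some)

lemma chain_measure:
  assumes P: "Some (c,b) \<in> cubes_pos M" and i: "i \<le> sx (Some (c,b))"
  shows "(2^(DIM('a)+1))^(sx (Some (c,b)) - i) * measure M (Qc c (2^i*b))
           \<le> measure M (Qc c (2^(sx (Some (c,b)))*b))"
  using i
proof (induction "sx (Some (c,b)) - i" arbitrary: i)
  case 0 then show ?case by simp
next
  case (Suc k)
  have lt: "i < sx (Some (c,b))" using Suc by simp
  have nd: "\<not> doubling M (Some (c, 2^i*b))"
    using not_less_Least[OF lt[unfolded sx_def]] by (simp add: dilate_Some sx_def)
  have IH: "(2^(DIM('a)+1))^(sx (Some (c,b)) - Suc i) * measure M (Qc c (2^(Suc i)*b))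
           \<le> measure M (Qc c (2^(sx (Some (c,b)))*b))"
    using Suc lt by (intro Suc.hyps) auto
  have e: "sx (Some (c,b)) - i = Suc (sx (Some (c,b)) - Suc i)" using lt by simp
  have "(2^(DIM('a)+1))^(sx (Some (c,b)) - i) * measure M (Qc c (2^i*b))
      = (2^(DIM('a)+1))^(sx (Some (c,b)) - Suc i) * (2^(DIM('a)+1) * measure M (Qc c (2^i*b)))"
    by (simp only: e power_Suc) (simp add: algebra_simps)
  also have "\<dots> \<le> (2^(DIM('a)+1))^(sx (Some (c,b)) - Suc i) * measure M (Qc c (2^(Suc i)*b))"
    by (intro mult_left_mono nondoubling_step[OF P nd]) auto
  also note IH
  finally show ?case .
qed

end


lemma dyadic_bucket:
  fixes a s :: real
  assumes a: "a > 0" and J: "J \<ge> 1" and s: "a \<le> s" "s \<le> 2^J * a"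
  shows "\<exists>k<J. 2^k * a \<le> s \<and> s \<le> 2^(Suc k) * a"
  using J s
proof (induction J rule: dec_induct)
  case base then show ?case by auto
next
  case (step J)
  show ?case
  proof (cases "s \<le> 2^J * a")
    case True then show ?thesis using step by (metis less_SucI)
  next
    case False then show ?thesis using step by (intro exI[of _ J]) auto
  qed
qed

lemma side_QR_le:
  assumes "cube_set (Some r) \<subseteq> Qc c s0" "s0 > 0"
  shows "side_QR (Some (c,a)) (Some r) \<le> ereal s0"
proof -
  have "Inf {s. s > 0 \<and> cube_set (Some r) \<subseteq> Qc c s} \<le> s0"
    using assms by (intro cInf_lower) (auto intro: bdd_belowI[of _ 0])
  then show ?thesis by (simp add: side_QR_def)
qed

context setting begin

lemma delta_bound:
  assumes a: "a > 0" and J: "J \<ge> 1" and side: "side_QR (Some (c,a)) R \<le> ereal (2^J * a)"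
  shows "delta M n (Some (c,a)) R \<le>
     ennreal (\<Sum>k<J. measure M (Qc c (2^(Suc k)*a)) / (2^k*a) powr n)"
proof -
  define T where "T k = measure M (Qc c (2^(Suc k)*a)) / (2^k*a) powr n" for k
  define G where "G k s = ennreal (T k / (2^k*a)) * indicator {2^k*a .. 2^(Suc k)*a} s" for k and s :: real
  have pw: "indicator {s. ereal a \<le> ereal s \<and> ereal s \<le> side_QR (Some (c,a)) R} s *
        ennreal (measure M (Qc c s) * s powr (- n) / s) \<le> (\<Sum>k<J. G k s)" for s
  proof (cases "ereal a \<le> ereal s \<and> ereal s \<le> side_QR (Some (c,a)) R")
    case False then show ?thesis by simp
  next
    case True
    then have "ereal s \<le> ereal (2^J * a)" using side by (meson order.trans)
    then have s: "a \<le> s" "s \<le> 2^J * a" using True by auto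
    obtain k where k: "k < J" "2^k * a \<le> s" "s \<le> 2^(Suc k) * a"
      using dyadic_bucket[OF a J s] by blast
    have pk: "2^k * a > 0" using a by simp
    have sp: "s > 0" using pk k by linarith
    have m1: "measure M (Qc c s) \<le> measure M (Qc c (2^(Suc k)*a))"
      using k by (intro measure_Qc_mono Qc_mono) auto
    have m2: "s powr (-n) \<le> (2^k*a) powr (-n)"
      using k pk n_pos by (intro powr_mono2') auto
    have m3: "1 / s \<le> 1 / (2^k*a)" using k pk by (intro divide_left_mono) auto
    have "measure M (Qc c s) * s powr (- n) / s
        \<le> measure M (Qc c (2^(Suc k)*a)) * (2^k*a) powr (-n) / (2^k*a)"
    proof -
      have cc: "measure M (Qc c s) * s powr (- n) \<le> measure M (Qc c (2^(Suc k)*a)) * (2^k*a) powr (-n)"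
        using m1 m2 by (intro mult_mono) auto
      have "measure M (Qc c s) * s powr (- n) * (1/s)
        \<le> measure M (Qc c (2^(Suc k)*a)) * (2^k*a) powr (-n) * (1 / (2^k*a))"
        by (rule mult_mono[OF cc m3]) (use sp in auto)
      then show ?thesis by simp
    qed
    also have "\<dots> = T k / (2^k*a)" by (simp add: T_def powr_minus divide_inverse)
    finally have le: "ennreal (measure M (Qc c s) * s powr (- n) / s) \<le> G k s"
      using k by (simp add: G_def ennreal_leI)
    have "indicator {s. ereal a \<le> ereal s \<and> ereal s \<le> side_QR (Some (c,a)) R} s *
        ennreal (measure M (Qc c s) * s powr (- n) / s) = ennreal (measure M (Qc c s) * s powr (- n) / s)"
      using True by simp
    also have "\<dots> \<le> G k s" by (rule le)
    also have "\<dots> \<le> (\<Sum>k<J. G k s)" using k by (intro member_le_sum) auto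
    finally show ?thesis .
  qed
  have "delta M n (Some (c,a)) R \<le> (\<integral>\<^sup>+s. (\<Sum>k<J. G k s) \<partial>lborel)"
    unfolding delta_def using pw by (auto intro!: nn_integral_mono)
  also have "\<dots> = (\<Sum>k<J. \<integral>\<^sup>+s. G k s \<partial>lborel)"
    by (intro nn_integral_sum) (auto simp: G_def)
  also have "\<dots> = (\<Sum>k<J. ennreal (T k))"
  proof (intro sum.cong refl)
    fix k assume "k \<in> {..<J}"
    have pk: "2^k * a > 0" using a by simp
    have "(\<integral>\<^sup>+s. G k s \<partial>lborel) = ennreal (T k / (2^k*a)) * ennreal (2^(Suc k)*a - 2^k*a)"
    proof -
      have "2^k*a \<le> 2^(Suc k)*a" using a by simp
      then have "emeasure lborel {2^k*a .. 2^(Suc k)*a} = ennreal (2^(Suc k)*a - 2^k*a)"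
        by (rule emeasure_lborel_Icc)
      then show ?thesis unfolding G_def by (subst nn_integral_cmult_indicator) auto
    qed
    also have "\<dots> = ennreal (T k)"
      using pk by (subst ennreal_mult'[symmetric]) (auto simp: T_def)
    finally show "(\<integral>\<^sup>+s. G k s \<partial>lborel) = ennreal (T k)" .
  qed
  also have "\<dots> = ennreal (\<Sum>k<J. T k)"
    by (intro sum_ennreal) (auto simp: T_def)
  finally show ?thesis by (simp add: T_def)
qed

end


definition dd :: "nat \<Rightarrow> nat \<Rightarrow> nat" where
  "dd g e = (if g \<le> e then e - g else g - e)"

definition wgt :: "nat \<Rightarrow> nat \<Rightarrow> nat \<Rightarrow> nat \<Rightarrow> real" where
  "wgt t E v g = (if g < t then 1 else 0) + 4 * (1/2)^(dd g E) + 4 * (1/2)^(dd g (E+v))"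

lemma geo_dd: "(\<Sum>g<L. (1/2::real)^(dd g e)) \<le> 4"
proof -
  define S1 where "S1 = {g. g < L \<and> g \<le> e}"
  define S2 where "S2 = {g. g < L \<and> e < g}"
  have fin: "finite S1" "finite S2" by (auto simp: S1_def S2_def)
  have un: "{..<L} = S1 \<union> S2" by (auto simp: S1_def S2_def)
  have "(\<Sum>g<L. (1/2::real)^(dd g e)) = (\<Sum>g\<in>S1. (1/2::real)^(dd g e)) + (\<Sum>g\<in>S2. (1/2::real)^(dd g e))"
    unfolding un by (rule sum.union_disjoint) (auto simp: fin S1_def S2_def)
  also have "(\<Sum>g\<in>S1. (1/2::real)^(dd g e)) = (\<Sum>g\<in>S1. (1/2::real)^(e - g))"
    by (intro sum.cong) (auto simp: S1_def dd_def)
  also have "\<dots> = (\<Sum>i\<in>(\<lambda>g. e - g) ` S1. (1/2::real)^i)"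
    by (rule sum.reindex[symmetric, unfolded comp_def]) (auto simp: inj_on_def S1_def)
  also have "\<dots> \<le> 2"
    using geometric_sum_less[of "1/2::real" "(\<lambda>g. e - g) ` S1"] fin by auto
  also have "(\<Sum>g\<in>S2. (1/2::real)^(dd g e)) = (\<Sum>g\<in>S2. (1/2::real)^(g - e))"
    by (intro sum.cong) (auto simp: S2_def dd_def)
  also have "\<dots> = (\<Sum>i\<in>(\<lambda>g. g - e) ` S2. (1/2::real)^i)"
    by (rule sum.reindex[symmetric, unfolded comp_def]) (auto simp: inj_on_def S2_def)
  also have "\<dots> \<le> 2"
    using geometric_sum_less[of "1/2::real" "(\<lambda>g. g - e) ` S2"] fin by auto
  finally show ?thesis by simp
qed

lemma sum_wgt: "(\<Sum>g<L. wgt t E v g) \<le> real t + 32"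
proof -
  have "(\<Sum>g<L. wgt t E v g) = (\<Sum>g<L. (if g < t then 1 else 0::real)) + 4 * (\<Sum>g<L. (1/2::real)^(dd g E))
      + 4 * (\<Sum>g<L. (1/2::real)^(dd g (E+v)))"
    by (simp add: wgt_def sum.distrib sum_distrib_left)
  also have "(\<Sum>g<L. (if g < t then 1 else 0::real)) \<le> real t"
  proof -
    have "(\<Sum>g<L. (if g < t then 1 else 0::real)) = real (card {g. g < L \<and> g < t})"
      by (simp add: sum.If_cases Int_def conj_commute)
    also have "card {g. g < L \<and> g < t} \<le> card {..<t}" by (intro card_mono) auto
    finally show ?thesis by simp
  qed
  finally show ?thesis using geo_dd[where L=L and e=E] geo_dd[where L=L and e="E+v"] by linarith
qed

lemma wgt_ge1: "g < t \<Longrightarrow> 1 \<le> wgt t E v g"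
  by (simp add: wgt_def)

lemma wgt_geE: "4 * (1/2)^(dd g E) \<le> wgt t E v g"
  by (simp add: wgt_def)

lemma wgt_geEv: "4 * (1/2)^(dd g (E+v)) \<le> wgt t E v g"
  by (simp add: wgt_def)

lemma two_powr_le: "n \<le> real d \<Longrightarrow> (2::real) powr n \<le> 2^d"
proof -
  assume "n \<le> real d"
  then have "(2::real) powr n \<le> 2 powr (real d)" by (intro powr_mono) auto
  then show ?thesis by (simp add: powr_realpow)
qed

context setting begin

lemma chain_bound:
  assumes P: "Some (c,b) \<in> cubes_pos M" and i: "i \<le> sx (Some (c,b))"
  shows "measure M (Qc c (2^i*b)) \<le> C0 * (2^(Suc i)*b) powr n * (1/2)^(sx (Some (c,b)) - i)"
proof -
  define j where "j = sx (Some (c,b))"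
  have b: "b > 0" using P by (auto simp: cubes_pos_Some)
  define X where "X = (2^(Suc i)*b) powr n"
  have X: "X \<ge> 0" by (simp add: X_def)
  have ch: "(2^(DIM('a)+1))^(j - i) * measure M (Qc c (2^i*b)) \<le> measure M (Qc c (2^j*b))"
    using chain_measure[OF P i] by (simp add: j_def)
  have "measure M (Qc c (2^j*b)) \<le> C0 * (2 * (2^j*b)) powr n"
    using b by (intro growth_any) auto
  also have "2 * (2^j*b) = 2^(j-i) * (2^(Suc i)*b)"
  proof -
    obtain k where jk: "j = i + k" using i by (metis j_def le_add_diff_inverse)
    then show ?thesis by (simp add: power_add)
  qed
  also have "(2^(j-i) * (2^(Suc i)*b)) powr n = (2 powr n)^(j-i) * X"
    using b by (simp add: pow2_powr X_def)
  also have "C0 * ((2 powr n)^(j-i) * X) \<le> C0 * ((2^DIM('a))^(j-i) * X)"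
    using C0_pos X two_powr_le[OF n_le] by (intro mult_left_mono mult_right_mono power_mono) auto
  finally have mj: "measure M (Qc c (2^j*b)) \<le> C0 * ((2^DIM('a))^(j-i) * X)" .
  have eq: "(2^(DIM('a)+1)::real)^(j-i) = (2^DIM('a))^(j-i) * 2^(j-i)"
    by (simp only: power_add power_one_right power_mult_distrib)
  have "(2^DIM('a))^(j - i) * (2^(j-i) * measure M (Qc c (2^i*b)))
      = (2^(DIM('a)+1))^(j - i) * measure M (Qc c (2^i*b))" by (simp only: eq mult.assoc)
  also have "\<dots> \<le> measure M (Qc c (2^j*b))" by (rule ch)
  also note mj
  also have "C0 * ((2^DIM('a))^(j-i) * X) = (2^DIM('a))^(j - i) * (C0 * X)" by simp
  finally have "(2^DIM('a))^(j - i) * (2^(j-i) * measure M (Qc c (2^i*b))) \<le> (2^DIM('a))^(j - i) * (C0 * X)" .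
  then have "2^(j-i) * measure M (Qc c (2^i*b)) \<le> C0 * X"
    by (simp add: mult_le_cancel_left_pos)
  then have "measure M (Qc c (2^i*b)) \<le> C0 * X / 2^(j-i)"
    by (simp add: field_simps)
  then show ?thesis by (simp add: X_def j_def power_one_over)
qed

lemma growth_pow:
  assumes u: "u > 0"
  shows "measure M (Qc x (2^(g+2)*u)) \<le> C0 * 8 powr n * (2^g*u) powr n"
proof -
  have "measure M (Qc x (2^(g+2)*u)) \<le> C0 * (2 * (2^(g+2)*u)) powr n"
    using u by (intro growth_any) auto
  also have "2 * (2^(g+2)*u) = 8 * (2^g*u)" by (simp add: power_add)
  also have "(8 * (2^g*u)) powr n = 8 powr n * (2^g*u) powr n" by (simp add: powr_mult)
  finally show ?thesis by (simp add: algebra_simps)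
qed

lemma term_bound:
  assumes u: "u > 0" and near: "\<And>b. b \<in> Basis \<Longrightarrow> \<bar>(y - c) \<bullet> b\<bar> \<le> 2^t*u/2"
    and P: "Some (c, 2^p*u) \<in> cubes_pos M" and pt: "p \<le> t"
    and E: "E = p + sx (Some (c, 2^p*u))"
    and v: "v = sx (Some (c, 2^(E+1)*u))"
    and g: "g < E + v + 2"
  shows "measure M (Qc y (2^(Suc g)*u)) \<le> C0 * 8 powr n * wgt t E v g * (2^g*u) powr n"
proof -
  define X where "X = (2^g*u) powr n"
  have X: "X > 0" using u by (simp add: X_def)
  define W where "W = C0 * 8 powr n"
  have W: "W > 0" using C0_pos by (simp add: W_def)
  have gr: "measure M (Qc x (2^(g+2)*u)) \<le> W * X" for x
    using growth_pow[OF u, of x g] by (simp add: W_def X_def)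
  have my: "measure M (Qc y (2^(Suc g)*u)) \<le> measure M (Qc y (2^(g+2)*u))"
    using u by (intro measure_Qc_mono Qc_mono) auto
  show ?thesis
  proof (cases "g < t")
    case True
    have "measure M (Qc y (2^(Suc g)*u)) \<le> W * X" using my gr[of y] by linarith
    also have "\<dots> \<le> W * wgt t E v g * X"
      using wgt_ge1[OF True, of E v] W X by (simp add: mult_right_mono mult_le_cancel_left1 mult.assoc)
    finally show ?thesis by (simp add: W_def X_def)
  next
    case False
    have tr: "Qc y (2^(Suc g)*u) \<subseteq> Qc c (2^(g+2)*u)"
    proof (rule Qc_subset)
      fix b :: 'a assume b: "b \<in> Basis"
      have "(2::real)^t \<le> 2^(Suc g)" using False by (intro power_increasing) auto
      then have h: "2^t*u/2 \<le> 2^g*u" using u by (simp add: mult_right_mono)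
      have eq: "2^(g+2)*u/2 = 2^(Suc g)*u/2 + (2::real)^g*u" by simp
      show "\<bar>(y - c) \<bullet> b\<bar> + 2^(Suc g)*u / 2 \<le> 2^(g+2)*u/2"
        using near[OF b] h eq by linarith
    qed
    define mc where "mc = measure M (Qc c (2^(g+2)*u))"
    have ymc: "measure M (Qc y (2^(Suc g)*u)) \<le> mc"
      unfolding mc_def by (rule measure_Qc_mono[OF tr])
    have "mc \<le> W * wgt t E v g * X"
    proof -
      consider (b) "g + 2 \<le> E" | (c) "E < g + 2" "g \<le> E" | (d) "E < g" "g < E + v" | (e) "E + v \<le> g"
        by linarith
      then show ?thesis
      proof cases
        case b
        define i where "i = g + 2 - p"
        have ij: "i \<le> sx (Some (c, 2^p*u))" using b E by (simp add: i_def)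
        have e1: "2^i * (2^p*u) = 2^(g+2)*u" using pt False by (simp add: i_def power_add[symmetric] mult.assoc)
        have e2: "(2^(Suc i) * (2^p*u)) powr n = 8 powr n * X"
        proof -
          have "2^(Suc i) * (2^p*u) = 8 * (2^g*u)"
            using pt False by (simp add: i_def power_add[symmetric] mult.assoc; simp add: power_add)
          then show ?thesis unfolding X_def by (metis powr_mult)
        qed
        have e3: "sx (Some (c, 2^p*u)) - i = dd g E - 2"
          using b E pt False by (simp add: i_def dd_def)
        have "mc \<le> C0 * (8 powr n * X) * (1/2)^(dd g E - 2)"
          using chain_bound[OF P ij] unfolding mc_def e1 e2 e3 .
        also have "(1/2::real)^(dd g E - 2) = 4 * (1/2)^(dd g E)"
        proof -
          have "dd g E = (dd g E - 2) + 2" using b by (simp add: dd_def)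
          then have "(1/2::real)^(dd g E) = (1/2)^((dd g E - 2) + 2)" by simp
          also have "\<dots> = (1/2)^(dd g E - 2) * (1/4)" by (simp only: power_add) (simp add: power2_eq_square)
          finally show ?thesis by simp
        qed
        also have "C0 * (8 powr n * X) * (4 * (1/2)^(dd g E)) \<le> C0 * (8 powr n * X) * wgt t E v g"
          using C0_pos X by (intro mult_left_mono wgt_geE) auto
        finally show ?thesis by (simp add: W_def algebra_simps)
      next
        case c
        have "dd g E \<le> 1" using c by (simp add: dd_def)
        then have "(1/2::real)^1 \<le> (1/2)^(dd g E)" by (intro power_decreasing) auto
        then have "1 \<le> wgt t E v g" using wgt_geE[of g E t v] by simp
        then have "W * X * 1 \<le> W * X * wgt t E v g" using W X by (intro mult_left_mono) auto
        then show ?thesis using gr[of c] unfolding mc_def by (simp add: algebra_simps)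
      next
        case d
        define R0b where "R0b = 2^(E+1)*u"
        have R0: "Some (c, R0b) \<in> cubes_pos M"
        proof (rule cubes_pos_mono[OF P])
          have "(2::real)^p \<le> 2^(E+1)" using E by (intro power_increasing) auto
          then show "2^p*u \<le> R0b" using u by (simp add: R0b_def mult_right_mono)
        qed
        define i where "i = g + 1 - E"
        have ij: "i \<le> sx (Some (c, R0b))" using d v by (simp add: i_def R0b_def)
        have e1: "2^i * R0b = 2^(g+2)*u" using d by (simp add: i_def R0b_def power_add[symmetric] mult.assoc)
        have e2: "(2^(Suc i) * R0b) powr n = 8 powr n * X"
        proof -
          have "2^(Suc i) * R0b = 8 * (2^g*u)"
            using d by (simp add: i_def R0b_def power_add[symmetric] mult.assoc; simp add: power_add)
          then show ?thesis unfolding X_def by (metis powr_mult)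
        qed
        have e3: "sx (Some (c, R0b)) - i = dd g (E+v) - 1"
          using d v by (simp add: i_def dd_def R0b_def)
        have "mc \<le> C0 * (8 powr n * X) * (1/2)^(dd g (E+v) - 1)"
          using chain_bound[OF R0 ij] unfolding mc_def e1 e2 e3 .
        also have "(1/2::real)^(dd g (E+v) - 1) \<le> 4 * (1/2)^(dd g (E+v))"
        proof -
          have "dd g (E+v) = (dd g (E+v) - 1) + 1" using d by (simp add: dd_def)
          then have "(1/2::real)^(dd g (E+v)) = (1/2)^((dd g (E+v) - 1) + 1)" by simp
          then have "(1/2::real)^(dd g (E+v)) = (1/2)^(dd g (E+v) - 1) * (1/2)"
            by (simp only: power_add power_one_right)
          moreover have "(0::real) \<le> (1/2)^(dd g (E+v))" by simp
          ultimately show ?thesis by linarith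
        qed
        also have "4 * (1/2)^(dd g (E+v)) \<le> wgt t E v g" by (rule wgt_geEv)
        finally have "mc \<le> C0 * (8 powr n * X) * wgt t E v g"
          using C0_pos X by (simp add: mult_left_mono)
        then show ?thesis by (simp add: W_def algebra_simps)
      next
        case e
        have "dd g (E+v) \<le> 1" using e g unfolding dd_def by arith
        then have "(1/2::real)^1 \<le> (1/2)^(dd g (E+v))" by (intro power_decreasing) auto
        then have "1 \<le> wgt t E v g" using wgt_geEv[of g E v t] by simp
        then have "W * X * 1 \<le> W * X * wgt t E v g" using W X by (intro mult_left_mono) auto
        then show ?thesis using gr[of c] unfolding mc_def by (simp add: algebra_simps)
      qed
    qed
    then show ?thesis using ymc by (simp add: W_def X_def)
  qed
qed

end


context setting begin

lemma delta_U:
  assumes u: "u > 0" and near: "\<And>b. b \<in> Basis \<Longrightarrow> \<bar>(y - c) \<bullet> b\<bar> \<le> 2^t*u/2"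
    and P: "Some (c, 2^p*u) \<in> cubes_pos M" and pt: "p \<le> t"
    and E: "E = p + sx (Some (c, 2^p*u))"
    and v: "v = sx (Some (c, 2^(E+1)*u))"
    and E': "E' \<le> E" and tE: "t \<le> E"
  shows "delta M n (Some (y, (2^E' * u))) (Some (c, (2^v * (2^(E+1) * u)))) \<le> ennreal (C0 * 8 powr n * (real t + 32))"
proof -
  define a where "a = (2^E' * u)"
  have a: "a > 0" using u by (simp add: a_def)
  define J where "J = E + 2 + v - E'"
  have J: "J \<ge> 1" using E' by (simp add: J_def)
  have side: "side_QR (Some (y,a)) (Some (c, (2^v * (2^(E+1) * u)))) \<le> ereal (2^J * a)"
  proof (rule side_QR_le)
    have "2^J * a = 2^(E+2+v)*u" using E' by (simp add: J_def a_def power_add[symmetric])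
    moreover have "Qc c ((2^v * (2^(E+1) * u))) \<subseteq> Qc y (2^(E+2+v)*u)"
    proof (rule Qc_subset)
      fix b :: 'a assume b: "b \<in> Basis"
      have "\<bar>(c - y) \<bullet> b\<bar> = \<bar>(y - c) \<bullet> b\<bar>" by (simp add: inner_diff_left)
      moreover have "(2::real)^t \<le> 2^(E+v+1)" using tE by (intro power_increasing) auto
      then have "2^t*u/2 \<le> 2^(E+v+1)*u/2" using u by (simp add: mult_right_mono)
      moreover have "2^(E+2+v)*u/2 = (2^v * (2^(E+1) * u))/2 + (2::real)^(E+v+1)*u/2"
        by (simp add: power_add)
      ultimately show "\<bar>(c - y) \<bullet> b\<bar> + (2^v * (2^(E+1) * u))/2 \<le> 2^(E+2+v)*u/2"
        using near[OF b] by linarith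
    qed
    ultimately show "cube_set (Some (c, (2^v * (2^(E+1) * u)))) \<subseteq> Qc y (2^J * a)"
      by (simp add: cube_set_Some)
    show "2^J * a > 0" using a by simp
  qed
  have "delta M n (Some (y,a)) (Some (c, (2^v * (2^(E+1) * u))))
        \<le> ennreal (\<Sum>k<J. measure M (Qc y (2^(Suc k)*a)) / (2^k*a) powr n)"
    by (rule delta_bound[OF a J side])
  also have "(\<Sum>k<J. measure M (Qc y (2^(Suc k)*a)) / (2^k*a) powr n)
      \<le> (\<Sum>k<J. C0 * 8 powr n * wgt t E v (E'+k))"
  proof (intro sum_mono)
    fix k assume k: "k \<in> {..<J}"
    have g: "E' + k < E + v + 2" using k E' by (simp add: J_def)
    have e1: "2^(Suc k)*a = 2^(Suc (E'+k))*u" by (simp add: a_def power_add)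
    have e2: "2^k*a = 2^(E'+k)*u" by (simp add: a_def power_add)
    have pos: "(2^(E'+k)*u) powr n > 0" using u by simp
    show "measure M (Qc y (2^(Suc k)*a)) / (2^k*a) powr n \<le> C0 * 8 powr n * wgt t E v (E'+k)"
      unfolding e1 e2 using term_bound[OF u near P pt E v g] pos by (simp add: divide_le_eq)
  qed
  also have "\<dots> = C0 * 8 powr n * (\<Sum>k<J. wgt t E v (E'+k))" by (simp add: sum_distrib_left)
  also have "(\<Sum>k<J. wgt t E v (E'+k)) \<le> (\<Sum>g<E+v+2. wgt t E v g)"
  proof -
    have "(\<Sum>k<J. wgt t E v (E'+k)) = (\<Sum>g\<in>{E'..<E'+J}. wgt t E v g)"
      by (simp add: sum.shift_bounds_nat_ivl[symmetric] lessThan_atLeast0 add.commute)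
    also have "\<dots> \<le> (\<Sum>g<E+v+2. wgt t E v g)"
      using E' by (intro sum_mono2) (auto simp: J_def wgt_def)
    finally show ?thesis .
  qed
  also have "\<dots> \<le> real t + 32" by (rule sum_wgt)
  finally show ?thesis
    using C0_pos by (simp add: a_def ennreal_leI mult_left_mono)
qed

end


definition HBprop :: "'a::euclidean_space measure \<Rightarrow> real \<Rightarrow> real \<Rightarrow> ('a \<Rightarrow> real) \<Rightarrow> real \<Rightarrow> bool" where
  "HBprop M n e f B \<longleftrightarrow> (\<forall>Q R. Q \<in> cubes_doubling M \<and> R \<in> cubes_doubling M \<and> cube_set Q \<subseteq> cube_set R \<longrightarrow>
     ennreal (measure M (cube_set Q) powr e) * ennreal \<bar>mean M f Q - mean M f R\<bar> / K_QR M n Q R \<le> ennreal B)"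

lemma mean_diff_bound:
  assumes HB: "HBprop M n e f B" and B: "B \<ge> 0"
    and Q: "doubling M Q" and R: "doubling M R" and QR: "cube_set Q \<subseteq> cube_set R"
    and D: "delta M n Q R \<le> ennreal D" and D0: "D \<ge> 0"
  shows "measure M (cube_set Q) powr e * \<bar>mean M f Q - mean M f R\<bar> \<le> B * (1 + D)"
proof -
  have "ennreal (measure M (cube_set Q) powr e) * ennreal \<bar>mean M f Q - mean M f R\<bar> / K_QR M n Q R \<le> ennreal B"
    using HB Q R QR by (auto simp: HBprop_def cubes_doubling_def)
  moreover obtain dr where dr: "delta M n Q R = ennreal dr" "dr \<ge> 0"
  proof -
    have "delta M n Q R \<noteq> top" using D by (auto simp: top_unique)
    then show ?thesis using that by (cases "delta M n Q R") auto
  qed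
  define x where "x = measure M (cube_set Q) powr e * \<bar>mean M f Q - mean M f R\<bar>"
  have x: "x \<ge> 0" by (simp add: x_def)
  have K: "K_QR M n Q R = ennreal (1 + dr)" using dr by (simp add: K_QR_def ennreal_plus)
  have e1: "ennreal (measure M (cube_set Q) powr e) * ennreal \<bar>mean M f Q - mean M f R\<bar> = ennreal x"
    by (simp add: x_def ennreal_mult)
  have e2: "ennreal x / K_QR M n Q R = ennreal (x / (1 + dr))"
    unfolding K using x dr by (intro divide_ennreal) auto
  ultimately have "ennreal (x / (1 + dr)) \<le> ennreal B"
    by (simp only: e1 e2)
  then have "x / (1 + dr) \<le> B" using B by (simp add: ennreal_le_iff)
  then have "x \<le> B * (1 + dr)" using dr by (simp add: divide_le_eq)
  also have "dr \<le> D" using D dr D0 by (simp add: ennreal_le_iff)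
  then have "B * (1 + dr) \<le> B * (1 + D)" using B by (intro mult_left_mono) auto
  finally show ?thesis by (simp add: x_def)
qed



context setting begin

lemma star_contain:
  fixes y c :: 'a
  assumes u: "u > 0" and near: "\<And>b. b \<in> Basis \<Longrightarrow> \<bar>(y - c) \<bullet> b\<bar> \<le> 2^t*u/2"
    and E': "E' \<le> E" and tE: "t \<le> E"
  shows "Qc y (2^E' * u) \<subseteq> Qc c (2^v * (2^(E+1) * u))"
proof (rule Qc_subset)
  fix b :: 'a assume b: "b \<in> Basis"
  have "(2::real)^t \<le> 2^E" using tE by (intro power_increasing) auto
  then have h1: "2^t*u/2 \<le> 2^E*u/2" using u by (simp add: mult_right_mono)
  have "(2::real)^E' \<le> 2^E" using E' by (intro power_increasing) auto
  then have h2: "2^E'*u/2 \<le> 2^E*u/2" using u by (simp add: mult_right_mono)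
  have "(2::real)^(E+1) \<le> 2^v * 2^(E+1)" by simp
  then have h3: "2^E*u \<le> 2^v * (2^(E+1) * u)/2" using u by (simp add: mult_right_mono)
  show "\<bar>(y - c) \<bullet> b\<bar> + 2^E'*u/2 \<le> 2^v * (2^(E+1) * u)/2"
    using near[OF b] h1 h2 h3 by linarith
qed

lemma doubling_measure_pos: "doubling M Q \<Longrightarrow> measure M (cube_set Q) > 0 \<or> Q = None"
  by (cases Q) (auto simp: doubling_def cube_set_Some measure_pos)

lemma pair_bound:
  assumes HB: "HBprop M n e f B" and B: "B \<ge> 0" and u: "u > 0"
    and near: "\<And>b. b \<in> Basis \<Longrightarrow> \<bar>(y - c) \<bullet> b\<bar> \<le> 2^t*u/2"
    and P: "Some (c, 2^p*u) \<in> cubes_pos M" and pt: "p \<le> t"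
    and P': "Some (y, 2^p'*u) \<in> cubes_pos M" and pt': "p' \<le> t"
    and E: "E = p + sx (Some (c, 2^p*u))" and E'def: "E' = p' + sx (Some (y, 2^p'*u))"
    and E': "E' \<le> E" and tE: "t \<le> E"
  shows "\<bar>mean M f (star M (Some (c, 2^p*u))) - mean M f (star M (Some (y, 2^p'*u)))\<bar>
     \<le> B * (1 + C0 * 8 powr n * (real t + 32)) *
        (measure M (cube_set (star M (Some (c, 2^p*u)))) powr (-e)
         + measure M (cube_set (star M (Some (y, 2^p'*u)))) powr (-e))"
proof -
  define D where "D = C0 * 8 powr n * (real t + 32)"
  have D0: "D \<ge> 0" using C0_pos by (simp add: D_def)
  have s1: "star M (Some (c, 2^p*u)) = Some (c, 2^E*u)"
    by (simp add: star_Some E power_add)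
  have s2: "star M (Some (y, 2^p'*u)) = Some (y, 2^E'*u)"
    by (simp add: star_Some E'def power_add)
  have "2^E*u = 2^(sx (Some (c, 2^p*u)))*(2^p*u)" by (simp add: E power_add)
  then have d1: "doubling M (Some (c, 2^E*u))" using star_doubling[OF P] by metis
  have "2^E'*u = 2^(sx (Some (y, 2^p'*u)))*(2^p'*u)" by (simp add: E'def power_add)
  then have d2: "doubling M (Some (y, 2^E'*u))" using star_doubling[OF P'] by metis
  define v where "v = sx (Some (c, 2^(E+1)*u))"
  have R0: "Some (c, 2^(E+1)*u) \<in> cubes_pos M"
  proof (rule cubes_pos_mono[OF P])
    have "(2::real)^p \<le> 2^(E+1)" using E by (intro power_increasing) auto
    then show "2^p*u \<le> 2^(E+1)*u" using u by (simp add: mult_right_mono)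
  qed
  define R where "R = Some (c, 2^v * (2^(E+1)*u))"
  have dR: "doubling M R" using star_doubling[OF R0] by (simp add: R_def v_def)
  have near0: "\<And>b. b \<in> Basis \<Longrightarrow> \<bar>(c - c) \<bullet> b\<bar> \<le> 2^t*u/2" using u by simp
  have c1: "cube_set (Some (c, 2^E*u)) \<subseteq> cube_set R"
    unfolding cube_set_Some R_def by (rule star_contain[OF u near0 order_refl tE])
  have c2: "cube_set (Some (y, 2^E'*u)) \<subseteq> cube_set R"
    unfolding cube_set_Some R_def by (rule star_contain[OF u near E' tE])
  have del1: "delta M n (Some (c, 2^E*u)) R \<le> ennreal D"
    unfolding R_def D_def by (rule delta_U[OF u near0 P pt E v_def order_refl tE])
  have del2: "delta M n (Some (y, 2^E'*u)) R \<le> ennreal D"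
    unfolding R_def D_def by (rule delta_U[OF u near P pt E v_def E' tE])
  have b1: "measure M (cube_set (Some (c, 2^E*u))) powr e * \<bar>mean M f (Some (c, 2^E*u)) - mean M f R\<bar> \<le> B * (1 + D)"
    by (rule mean_diff_bound[OF HB B d1 dR c1 del1 D0])
  have b2: "measure M (cube_set (Some (y, 2^E'*u))) powr e * \<bar>mean M f (Some (y, 2^E'*u)) - mean M f R\<bar> \<le> B * (1 + D)"
    by (rule mean_diff_bound[OF HB B d2 dR c2 del2 D0])
  have conv: "\<bar>a\<bar> \<le> K * m powr (-e)" if "m powr e * \<bar>a\<bar> \<le> K" "m > 0" for m a K :: real
  proof -
    have "\<bar>a\<bar> \<le> K / m powr e" using that by (simp add: pos_le_divide_eq mult.commute)
    then show ?thesis by (simp add: powr_minus divide_inverse)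
  qed
  have m1: "measure M (cube_set (Some (c, 2^E*u))) > 0" using doubling_measure_pos[OF d1] by simp
  have m2: "measure M (cube_set (Some (y, 2^E'*u))) > 0" using doubling_measure_pos[OF d2] by simp
  have "\<bar>mean M f (Some (c, 2^E*u)) - mean M f (Some (y, 2^E'*u))\<bar>
      \<le> \<bar>mean M f (Some (c, 2^E*u)) - mean M f R\<bar> + \<bar>mean M f (Some (y, 2^E'*u)) - mean M f R\<bar>"
    by linarith
  also have "\<dots> \<le> B * (1 + D) * measure M (cube_set (Some (c, 2^E*u))) powr (-e)
       + B * (1 + D) * measure M (cube_set (Some (y, 2^E'*u))) powr (-e)"
    using conv[OF b1 m1] conv[OF b2 m2] by linarith
  finally show ?thesis unfolding s1 s2 D_def by (simp add: algebra_simps)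
qed

end


lemma inner_sum_Basis:
  fixes f :: "'a::euclidean_space \<Rightarrow> real"
  assumes "b \<in> Basis"
  shows "(\<Sum>b'\<in>Basis. f b' *\<^sub>R b') \<bullet> b = f b"
  using assms by (simp add: inner_sum_left inner_Basis if_distrib sum.delta cong: if_cong)

lemma grid_coord:
  fixes r :: real and N :: nat
  assumes N: "N \<ge> 1" and r: "0 \<le> r" "r \<le> real N"
  defines "m \<equiv> min (N - 1) (nat \<lfloor>r\<rfloor>)"
  shows "m < N" "real m \<le> r" "r \<le> real m + 1"
proof -
  show "m < N" using N by (simp add: m_def)
  show "real m \<le> r"
  proof -
    have "real (nat \<lfloor>r\<rfloor>) \<le> r" using r by (simp add: of_nat_nat)
    moreover have "real m \<le> real (nat \<lfloor>r\<rfloor>)" by (simp add: m_def)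
    ultimately show ?thesis by linarith
  qed
  show "r \<le> real m + 1"
  proof (cases "nat \<lfloor>r\<rfloor> \<le> N - 1")
    case True
    then have "m = nat \<lfloor>r\<rfloor>" by (simp add: m_def)
    then show ?thesis using r by (simp add: of_nat_nat; linarith)
  next
    case False
    then have "m = N - 1" by (simp add: m_def)
    then have "real m + 1 = real N" using N by simp
    then show ?thesis using r by simp
  qed
qed

lemma grid:
  fixes z :: "'a::euclidean_space" and l :: real
  assumes l: "l > 0"
  obtains G where "finite G" "card G \<le> (2^t)^DIM('a)"
    "\<And>y b. y \<in> G \<Longrightarrow> b \<in> Basis \<Longrightarrow> \<bar>(y - z) \<bullet> b\<bar> \<le> l/2 - (l/2^t)/2"
    "Qc z l \<subseteq> (\<Union>y\<in>G. Qc y (l/2^t))"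
proof -
  define N :: nat where "N = 2^t"
  have N: "N \<ge> 1" by (simp add: N_def)
  define u where "u = l / 2^t"
  have u: "u > 0" using l by (simp add: u_def)
  have Nu: "real N * u = l" by (simp add: N_def u_def)
  define I :: "('a \<Rightarrow> nat) set" where "I = PiE Basis (\<lambda>_. {..<N})"
  define cen where "cen g = z + (\<Sum>b\<in>Basis. ((real (g b) + 1/2)*u - l/2) *\<^sub>R b)" for g :: "'a \<Rightarrow> nat"
  have cen_inner: "(cen g - z) \<bullet> b = (real (g b) + 1/2)*u - l/2" if "b \<in> Basis" for g b
    using that by (simp add: cen_def inner_sum_Basis)
  define G where "G = cen ` I"
  have finI: "finite I" by (simp add: I_def finite_PiE)
  have "finite G" by (simp add: G_def finI)
  moreover have "card G \<le> (2^t)^DIM('a)"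
  proof -
    have "card G \<le> card I" unfolding G_def using finI by (rule card_image_le)
    also have "card I = N^DIM('a)" by (simp add: I_def card_PiE)
    finally show ?thesis by (simp add: N_def)
  qed
  moreover have "\<bar>(y - z) \<bullet> b\<bar> \<le> l/2 - (l/2^t)/2" if yG: "y \<in> G" and bB: "b \<in> Basis" for y b
  proof -
    obtain g where g: "g \<in> I" "y = cen g" using yG by (auto simp: G_def)
    have gb: "g b < N" using g bB by (auto simp: I_def PiE_def Pi_def)
    then have "real (g b) + 1 \<le> real N" by linarith
    then have "(real (g b) + 1) * u \<le> real N * u" using u by (intro mult_right_mono) auto
    then have h: "(real (g b) + 1/2) * u + u/2 \<le> l" using Nu by (simp add: algebra_simps)
    have h0: "0 \<le> real (g b) * u" using u by simp
    have w: "(y - z) \<bullet> b = real (g b) * u + u/2 - l/2"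
      using g cen_inner[OF bB, of g] by (simp add: algebra_simps)
    have h': "real (g b) * u + u \<le> l" using h by (simp add: algebra_simps)
    have "\<bar>(y - z) \<bullet> b\<bar> \<le> l/2 - u/2" unfolding w abs_le_iff using h' h0 by linarith
    then show ?thesis by (simp add: u_def)
  qed
  moreover have "Qc z l \<subseteq> (\<Union>y\<in>G. Qc y (l/2^t))"
  proof
    fix x assume x: "x \<in> Qc z l"
    define r where "r b = ((x - z) \<bullet> b + l/2) / u" for b
    have r: "0 \<le> r b \<and> r b \<le> real N" if "b \<in> Basis" for b
    proof -
      have "\<bar>(x - z) \<bullet> b\<bar> \<le> l/2" using x that by (simp add: mem_Qc)
      then have "0 \<le> (x - z) \<bullet> b + l/2" "(x - z) \<bullet> b + l/2 \<le> real N * u" using Nu by auto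
      then show ?thesis using u by (simp add: r_def divide_le_eq)
    qed
    define g where "g = restrict (\<lambda>b. min (N - 1) (nat \<lfloor>r b\<rfloor>)) Basis"
    have gI: "g \<in> I" using grid_coord(1)[OF N] r by (auto simp: I_def g_def)
    have "x \<in> Qc (cen g) u"
      unfolding mem_Qc
    proof
      fix b :: 'a assume b: "b \<in> Basis"
      have gb: "g b = min (N - 1) (nat \<lfloor>r b\<rfloor>)" using b by (simp add: g_def)
      have c1: "real (g b) \<le> r b" "r b \<le> real (g b) + 1"
        using grid_coord(2,3)[OF N, of "r b"] r[OF b] gb by auto
      have rb: "r b * u = (x - z) \<bullet> b + l/2" using u by (simp add: r_def)
      have "real (g b) * u \<le> r b * u" using c1 u by (intro mult_right_mono) auto
      moreover have "r b * u \<le> (real (g b) + 1) * u" using c1 u by (intro mult_right_mono) auto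
      ultimately have c2: "real (g b) * u \<le> (x - z) \<bullet> b + l/2" "(x - z) \<bullet> b + l/2 \<le> (real (g b) + 1) * u"
        using rb by auto
      have "(x - cen g) \<bullet> b = (x - z) \<bullet> b - (cen g - z) \<bullet> b" by (simp add: inner_diff_left)
      then have "(x - cen g) \<bullet> b = (x - z) \<bullet> b + l/2 - (real (g b) + 1/2)*u"
        using cen_inner[OF b] by simp
      then show "\<bar>(x - cen g) \<bullet> b\<bar> \<le> u/2" unfolding abs_le_iff using c2 by (simp only:) (simp add: algebra_simps)
    qed
    then show "x \<in> (\<Union>y\<in>G. Qc y (l/2^t))" using gI by (auto simp: G_def u_def)
  qed
  ultimately show ?thesis using that by blast
qed



lemma li_measurable:
  fixes M :: "'a::euclidean_space measure"
  assumes sM: "sets M = sets borel" and li: "locally_integrable M f"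
  shows "f \<in> borel_measurable M"
proof (rule borel_measurable_LIMSEQ_real)
  fix i :: nat
  have "set_integrable M (cball 0 (real i)) f" using li by (simp add: locally_integrable_def)
  then have "integrable M (\<lambda>x. indicator (cball 0 (real i)) x *\<^sub>R f x)" by (simp add: set_integrable_def)
  then show "(\<lambda>x. indicator (cball 0 (real i)) x *\<^sub>R f x) \<in> borel_measurable M" by auto
next
  fix x :: 'a
  obtain N :: nat where N: "norm x \<le> real N" using real_arch_simple by blast
  have "eventually (\<lambda>i. indicator (cball 0 (real i)) x *\<^sub>R f x = f x) sequentially"
    unfolding eventually_sequentially
  proof (intro exI[of _ N] allI impI)
    fix i assume "N \<le> i"
    then have "x \<in> cball 0 (real i)" using N by (simp add: dist_norm; linarith)
    then show "indicator (cball 0 (real i)) x *\<^sub>R f x = f x" by simp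
  qed
  then show "(\<lambda>i. indicator (cball 0 (real i)) x *\<^sub>R f x) \<longlonglongrightarrow> f x" by (rule tendsto_eventually)
qed

lemma powr_tri:
  fixes a c c' qq :: real
  assumes q: "qq \<ge> 1"
  shows "\<bar>a - c\<bar> powr qq \<le> 2 powr qq * (\<bar>a - c'\<bar> powr qq + \<bar>c' - c\<bar> powr qq)"
proof -
  define m where "m = max \<bar>a - c'\<bar> \<bar>c' - c\<bar>"
  have t: "\<bar>a - c\<bar> \<le> \<bar>a - c'\<bar> + \<bar>c' - c\<bar>" using abs_triangle_ineq[of "a-c'" "c'-c"] by simp
  have "\<bar>a - c'\<bar> \<le> m" "\<bar>c' - c\<bar> \<le> m" by (simp_all add: m_def)
  then have "\<bar>a - c\<bar> \<le> 2 * m" using t by linarith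
  then have "\<bar>a - c\<bar> powr qq \<le> (2 * m) powr qq" using q by (intro powr_mono2) auto
  also have "\<dots> = 2 powr qq * m powr qq" using q by (simp add: powr_mult m_def)
  also have "m powr qq \<le> \<bar>a - c'\<bar> powr qq + \<bar>c' - c\<bar> powr qq"
    by (simp add: m_def max_def)
  then have "2 powr qq * m powr qq \<le> 2 powr qq * (\<bar>a - c'\<bar> powr qq + \<bar>c' - c\<bar> powr qq)"
    by (intro mult_left_mono) auto
  finally show ?thesis .
qed

lemma enn_powr_ennreal: "x \<ge> 0 \<Longrightarrow> enn_powr (ennreal x) a = ennreal (x powr a)"
  by (simp add: enn_powr_def)

lemma from_HA:
  assumes Y: "Y > 0" and A: "A \<ge> 0" and q: "qq \<ge> 1"
    and H: "ennreal (Y powr (e - 1/qq)) * enn_powr I (1/qq) \<le> ennreal A"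
  shows "I \<le> ennreal (A powr qq * Y powr (1 - e*qq))"
proof -
  have It: "I \<noteq> top"
  proof
    assume "I = top"
    then have "ennreal (Y powr (e - 1/qq)) * enn_powr I (1/qq) = top"
      using Y by (simp add: enn_powr_def ennreal_mult_top)
    then show False using H by (simp add: top_unique)
  qed
  then obtain Ir where Ir: "I = ennreal Ir" "Ir \<ge> 0" by (cases I) auto
  have "ennreal (Y powr (e - 1/qq) * Ir powr (1/qq)) \<le> ennreal A"
    using H Ir by (simp add: enn_powr_ennreal ennreal_mult)
  then have h: "Y powr (e - 1/qq) * Ir powr (1/qq) \<le> A" using A by (simp add: ennreal_le_iff)
  have "Ir powr (1/qq) \<le> A * Y powr (1/qq - e)"
  proof -
    have le: "Y powr (1/qq - e) * (Y powr (e - 1/qq) * Ir powr (1/qq)) \<le> Y powr (1/qq - e) * A"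
      using h by (intro mult_left_mono) auto
    have eq: "Y powr (1/qq - e) * Y powr (e - 1/qq) = 1" using Y by (simp add: powr_add[symmetric])
    have "Ir powr (1/qq) = (Y powr (1/qq - e) * Y powr (e - 1/qq)) * Ir powr (1/qq)" by (simp only: eq mult_1)
    also have "\<dots> = Y powr (1/qq - e) * (Y powr (e - 1/qq) * Ir powr (1/qq))" by (simp only: mult.assoc)
    also note le
    finally show ?thesis by (simp only: mult.commute)
  qed
  then have "(Ir powr (1/qq)) powr qq \<le> (A * Y powr (1/qq - e)) powr qq"
    using q by (intro powr_mono2) auto
  also have "(Ir powr (1/qq)) powr qq = Ir" using q Ir by (simp add: powr_powr)
  also have "(A * Y powr (1/qq - e)) powr qq = A powr qq * Y powr (1 - e*qq)"
  proof -
    have ex: "(1/qq - e)*qq = 1 - e*qq" using q by (simp add: field_simps)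
    show ?thesis by (simp only: powr_mult powr_powr ex)
  qed
  finally show ?thesis using Ir by (simp add: ennreal_leI)
qed

lemma to_goal:
  assumes X: "X > 0" and Bd: "Bd \<ge> 0" and q: "qq \<ge> 1" and I: "I \<le> ennreal Bd"
  shows "ennreal (X powr (e - 1/qq)) * enn_powr I (1/qq) \<le> ennreal (X powr (e - 1/qq) * Bd powr (1/qq))"
proof -
  have "I \<noteq> top" using I by (auto simp: top_unique)
  then obtain Ir where Ir: "I = ennreal Ir" "Ir \<ge> 0" by (cases I) auto
  have "Ir \<le> Bd" using I Ir Bd by (simp add: ennreal_le_iff)
  then have "Ir powr (1/qq) \<le> Bd powr (1/qq)" using Ir q by (intro powr_mono2) auto
  then have "X powr (e - 1/qq) * Ir powr (1/qq) \<le> X powr (e - 1/qq) * Bd powr (1/qq)"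
    by (intro mult_left_mono) auto
  then show ?thesis using Ir by (simp add: enn_powr_ennreal ennreal_mult[symmetric] ennreal_leI)
qed



lemma final_real:
  fixes X qq e A C cg Nd :: real
  assumes X: "X > 0" and q: "qq \<ge> 1" and A: "A \<ge> 0" and C: "C \<ge> 0"
    and cg: "0 \<le> cg" "cg \<le> Nd" and Nd: "Nd \<ge> 1"
  shows "X powr (e - 1/qq) * (cg * 2 powr qq * (A powr qq + C powr qq) * X powr (1 - e*qq)) powr (1/qq)
         \<le> 4 * Nd * (A + C)"
proof -
  define S where "S = A powr qq + C powr qq"
  have S0: "S \<ge> 0" by (simp add: S_def)
  have "(cg * 2 powr qq * S * X powr (1 - e*qq)) powr (1/qq)
      = cg powr (1/qq) * (2 powr qq) powr (1/qq) * S powr (1/qq) * (X powr (1 - e*qq)) powr (1/qq)"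
    by (simp add: powr_mult)
  also have "(2 powr qq) powr (1/qq) = (2::real)" using q by (simp add: powr_powr)
  also have "(X powr (1 - e*qq)) powr (1/qq) = X powr (1/qq - e)"
  proof -
    have "(1 - e*qq) * (1/qq) = 1/qq - e" using q by (simp add: field_simps)
    then show ?thesis by (simp add: powr_powr)
  qed
  finally have eq1: "X powr (e - 1/qq) * (cg * 2 powr qq * S * X powr (1 - e*qq)) powr (1/qq)
     = cg powr (1/qq) * 2 * S powr (1/qq) * (X powr (e - 1/qq) * X powr (1/qq - e))"
    by (simp add: mult_ac)
  have eq2: "X powr (e - 1/qq) * X powr (1/qq - e) = 1" using X by (simp add: powr_add[symmetric])
  have c1: "cg powr (1/qq) \<le> Nd"
  proof (cases "cg = 0")
    case True then show ?thesis using Nd by simp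
  next
    case False
    show ?thesis
    proof (cases "cg \<ge> 1")
      case True
      have "cg powr (1/qq) \<le> cg powr 1" using True q by (intro powr_mono) auto
      then show ?thesis using cg by simp
    next
      case False
      have "cg powr (1/qq) \<le> 1" using False cg q by (intro powr_le1) auto
      then show ?thesis using Nd by linarith
    qed
  qed
  have c2: "S powr (1/qq) \<le> 2 * (A + C)"
  proof -
    have "A powr qq \<le> (A + C) powr qq" "C powr qq \<le> (A + C) powr qq"
      using A C q by (auto intro!: powr_mono2)
    then have "S \<le> 2 * (A + C) powr qq" by (simp add: S_def)
    then have "S powr (1/qq) \<le> (2 * (A + C) powr qq) powr (1/qq)" using S0 q by (intro powr_mono2) auto
    also have "\<dots> = 2 powr (1/qq) * (A + C)" using q A C by (simp add: powr_mult powr_powr)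
    also have "2 powr (1/qq) \<le> (2::real) powr 1" using q by (intro powr_mono) auto
    then have "2 powr (1/qq) * (A + C) \<le> 2 * (A + C)" using A C by (intro mult_right_mono) auto
    finally show ?thesis .
  qed
  have "cg powr (1/qq) * 2 * S powr (1/qq) \<le> Nd * 2 * (2 * (A + C))"
    using c1 c2 Nd by (intro mult_mono) auto
  then show ?thesis using eq1 eq2 by (simp add: S_def algebra_simps)
qed



context setting begin

lemma mean_star_diff:
  assumes HB: "HBprop M n e f B" and B: "B \<ge> 0" and u: "u > 0"
    and near: "\<And>b. b \<in> Basis \<Longrightarrow> \<bar>(y - z) \<bullet> b\<bar> \<le> 2^t*u/2"
    and Qz: "Some (z, 2^t*u) \<in> cubes_pos M" and Qy: "Some (y, u) \<in> cubes_pos M"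
  shows "\<bar>mean M f (star M (Some (z, 2^t*u))) - mean M f (star M (Some (y, u)))\<bar>
     \<le> B * (1 + C0 * 8 powr n * (real t + 32)) *
        (measure M (cube_set (star M (Some (z, 2^t*u)))) powr (-e)
         + measure M (cube_set (star M (Some (y, u)))) powr (-e))"
proof -
  have Qy': "Some (y, 2^0*u) \<in> cubes_pos M" using Qy by simp
  define E where "E = t + sx (Some (z, 2^t*u))"
  define E' where "E' = 0 + sx (Some (y, 2^0*u))"
  show ?thesis
  proof (cases "E' \<le> E")
    case True
    have "t \<le> E" by (simp add: E_def)
    from pair_bound[OF HB B u _ Qz order_refl Qy' _ E_def E'_def True this] near
    show ?thesis by simp
  next
    case False
    have near': "\<bar>(z - y) \<bullet> b\<bar> \<le> 2^t*u/2" if "b \<in> Basis" for b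
    proof -
      have "\<bar>(z - y) \<bullet> b\<bar> = \<bar>(y - z) \<bullet> b\<bar>" by (simp add: inner_diff_left)
      then show ?thesis using near[OF that] by simp
    qed
    have "t \<le> E'" using False by (simp add: E_def)
    from pair_bound[OF HB B u near' Qy' _ Qz order_refl E'_def E_def _ this] False
    show ?thesis by (simp add: abs_minus_commute add.commute)
  qed
qed

lemma cube_piece:
  assumes li: "locally_integrable M f" and q: "qq \<ge> 1" and e0: "e \<ge> 0" and eq: "e * qq \<le> 1"
    and A: "A \<ge> 0" and B: "B \<ge> 0"
    and HA: "\<forall>Q'\<in>cubes_pos M. ennreal (measure M (cube_set (dilate k' Q')) powr (e - 1/qq)) *
       enn_powr (\<integral>\<^sup>+x. ennreal (\<bar>f x - mean M f (star M Q')\<bar> powr qq) * indicator (cube_set Q') x \<partial>M) (1/qq)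
       \<le> ennreal A"
    and HB: "HBprop M n e f B" and u: "u > 0"
    and Qz: "Some (z, 2^t*u) \<in> cubes_pos M"
    and near: "\<And>b. b \<in> Basis \<Longrightarrow> \<bar>(y - z) \<bullet> b\<bar> \<le> 2^t*u/2 - u/2"
    and sub: "Qc y (k'*u) \<subseteq> Qc z (k * (2^t*u))" and k': "k' \<ge> 1" and k: "k \<ge> 1"
  shows "(\<integral>\<^sup>+x. ennreal (\<bar>f x - mean M f (star M (Some (z, 2^t*u)))\<bar> powr qq) * indicator (Qc y u) x \<partial>M)
    \<le> ennreal (2 powr qq * (A powr qq + (2 * B * (1 + C0 * 8 powr n * (real t + 32))) powr qq)
          * measure M (Qc z (k * (2^t*u))) powr (1 - e*qq))"
proof (cases "emeasure M (Qc y u) = 0")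
  case True
  then have "Qc y u \<in> null_sets M" by (auto simp: null_sets_def)
  then show ?thesis by (simp add: nn_integral_null_set)
next
  case False
  define Kc where "Kc = 1 + C0 * 8 powr n * (real t + 32)"
  have Kc: "Kc \<ge> 1" using C0_pos by (simp add: Kc_def)
  define X where "X = measure M (Qc z (k * (2^t*u)))"
  define ms where "ms = mean M f (star M (Some (z, 2^t*u)))"
  define my where "my = mean M f (star M (Some (y, u)))"
  define \<mu> where "\<mu> = measure M (Qc y u)"
  have Qy: "Some (y, u) \<in> cubes_pos M" using False u by (auto simp: cubes_pos_Some intro: gr_zeroI)
  have mu: "\<mu> > 0" using measure_pos[OF Qy] by (simp add: \<mu>_def)
  have muX: "\<mu> \<le> X"
  proof -
    have "Qc y u \<subseteq> Qc y (k'*u)" using k' u by (intro Qc_mono) auto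
    then show ?thesis using sub by (auto simp: \<mu>_def X_def intro: measure_Qc_mono)
  qed
  have fm: "f \<in> borel_measurable M" by (rule li_measurable[OF sets_M li])
  have ee: "1 - e*qq \<ge> 0" using eq by simp
  define Iy where "Iy = (\<integral>\<^sup>+x. ennreal (\<bar>f x - my\<bar> powr qq) * indicator (Qc y u) x \<partial>M)"
  have Iy: "Iy \<le> ennreal (A powr qq * X powr (1 - e*qq))"
  proof -
    define Y where "Y = measure M (Qc y (k'*u))"
    have Y: "Y > 0"
    proof -
      have "Qc y u \<subseteq> Qc y (k'*u)" using k' u by (intro Qc_mono) auto
      then have "\<mu> \<le> Y" by (auto simp: \<mu>_def Y_def intro: measure_Qc_mono)
      then show ?thesis using mu by simp
    qed
    have YX: "Y \<le> X" using sub by (auto simp: Y_def X_def intro: measure_Qc_mono)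
    have "ennreal (Y powr (e - 1/qq)) * enn_powr Iy (1/qq) \<le> ennreal A"
      using HA Qy by (auto simp: Y_def Iy_def my_def dilate_Some cube_set_Some)
    then have "Iy \<le> ennreal (A powr qq * Y powr (1 - e*qq))" by (rule from_HA[OF Y A q])
    also have "A powr qq * Y powr (1 - e*qq) \<le> A powr qq * X powr (1 - e*qq)"
      using Y YX ee by (intro mult_left_mono powr_mono2) auto
    finally show ?thesis by (simp add: ennreal_leI order_trans)
  qed
  have D: "\<bar>ms - my\<bar> \<le> 2 * B * Kc * \<mu> powr (-e)"
  proof -
    have nr: "\<bar>(y - z) \<bullet> b\<bar> \<le> 2^t*u/2" if "b \<in> Basis" for b using near[OF that] u by simp
    have d: "\<bar>ms - my\<bar> \<le> B * Kc * (measure M (cube_set (star M (Some (z, 2^t*u)))) powr (-e)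
         + measure M (cube_set (star M (Some (y, u)))) powr (-e))"
      using mean_star_diff[OF HB B u nr Qz Qy] by (simp add: ms_def my_def Kc_def)
    have s1: "measure M (cube_set (star M (Some (z, 2^t*u)))) powr (-e) \<le> \<mu> powr (-e)"
    proof -
      have "Qc y u \<subseteq> Qc z (2^t*u)"
      proof (rule Qc_subset)
        fix b :: 'a assume "b \<in> Basis"
        then show "\<bar>(y - z) \<bullet> b\<bar> + u/2 \<le> 2^t*u/2" using near by fastforce
      qed
      also have "Qc z (2^t*u) \<subseteq> Qc z (2^(sx (Some (z, 2^t*u))) * (2^t*u))"
        using u by (intro Qc_mono) auto
      finally have "\<mu> \<le> measure M (cube_set (star M (Some (z, 2^t*u))))"
        by (auto simp: \<mu>_def star_Some cube_set_Some intro: measure_Qc_mono)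
      then show ?thesis using mu e0 by (intro powr_mono2') auto
    qed
    have s2: "measure M (cube_set (star M (Some (y, u)))) powr (-e) \<le> \<mu> powr (-e)"
    proof -
      have "Qc y u \<subseteq> Qc y (2^(sx (Some (y, u))) * u)"
        using u by (intro Qc_mono) auto
      then have "\<mu> \<le> measure M (cube_set (star M (Some (y, u))))"
        by (auto simp: \<mu>_def star_Some cube_set_Some intro: measure_Qc_mono)
      then show ?thesis using mu e0 by (intro powr_mono2') auto
    qed
    have "B * Kc * (measure M (cube_set (star M (Some (z, 2^t*u)))) powr (-e)
         + measure M (cube_set (star M (Some (y, u)))) powr (-e)) \<le> B * Kc * (\<mu> powr (-e) + \<mu> powr (-e))"
      using s1 s2 B Kc by (intro mult_left_mono) auto
    then show ?thesis using d by simp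
  qed
  have D2: "\<bar>my - ms\<bar> powr qq * \<mu> \<le> (2 * B * Kc) powr qq * X powr (1 - e*qq)"
  proof -
    have "\<bar>my - ms\<bar> powr qq \<le> (2 * B * Kc * \<mu> powr (-e)) powr qq"
      using D q by (intro powr_mono2) (auto simp: abs_minus_commute)
    also have "\<dots> = (2 * B * Kc) powr qq * \<mu> powr (-e*qq)"
      using B Kc mu by (simp add: powr_mult powr_powr)
    finally have "\<bar>my - ms\<bar> powr qq * \<mu> \<le> (2 * B * Kc) powr qq * \<mu> powr (-e*qq) * \<mu>"
      using mu by (intro mult_right_mono) auto
    also have "\<mu> powr (-e*qq) * \<mu> = \<mu> powr (1 - e*qq)"
    proof -
      have "\<mu> powr (1 - e*qq) = \<mu> powr (-e*qq + 1)" by simp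
      also have "\<dots> = \<mu> powr (-e*qq) * \<mu> powr 1" by (rule powr_add)
      finally show ?thesis using mu by simp
    qed
    then have "(2 * B * Kc) powr qq * \<mu> powr (-e*qq) * \<mu> = (2 * B * Kc) powr qq * \<mu> powr (1 - e*qq)"
      by (simp add: mult.assoc)
    also have "\<dots> \<le> (2 * B * Kc) powr qq * X powr (1 - e*qq)"
      using mu muX ee by (intro mult_left_mono powr_mono2) auto
    finally show ?thesis .
  qed
  have pw: "ennreal (\<bar>f x - ms\<bar> powr qq) * indicator (Qc y u) x \<le>
      ennreal (2 powr qq) * (ennreal (\<bar>f x - my\<bar> powr qq) * indicator (Qc y u) x
        + ennreal (\<bar>my - ms\<bar> powr qq) * indicator (Qc y u) x)" for x
  proof (cases "x \<in> Qc y u")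
    case True
    have "\<bar>f x - ms\<bar> powr qq \<le> 2 powr qq * (\<bar>f x - my\<bar> powr qq + \<bar>my - ms\<bar> powr qq)"
      by (rule powr_tri[OF q])
    then have "ennreal (\<bar>f x - ms\<bar> powr qq) \<le> ennreal (2 powr qq) * (ennreal (\<bar>f x - my\<bar> powr qq) + ennreal (\<bar>my - ms\<bar> powr qq))"
      by (simp add: ennreal_mult[symmetric] ennreal_plus[symmetric] ennreal_leI del: ennreal_plus)
    then show ?thesis using True by simp
  qed simp
  have "(\<integral>\<^sup>+x. ennreal (\<bar>f x - ms\<bar> powr qq) * indicator (Qc y u) x \<partial>M)
      \<le> (\<integral>\<^sup>+x. ennreal (2 powr qq) * (ennreal (\<bar>f x - my\<bar> powr qq) * indicator (Qc y u) x
        + ennreal (\<bar>my - ms\<bar> powr qq) * indicator (Qc y u) x) \<partial>M)"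
    by (intro nn_integral_mono pw)
  also have "\<dots> = ennreal (2 powr qq) * (Iy + ennreal (\<bar>my - ms\<bar> powr qq) * emeasure M (Qc y u))"
    using fm
    by (simp add: nn_integral_cmult nn_integral_add nn_integral_cmult_indicator Iy_def)
  also have "\<dots> \<le> ennreal (2 powr qq) * (ennreal (A powr qq * X powr (1 - e*qq)) +
        ennreal ((2 * B * Kc) powr qq * X powr (1 - e*qq)))"
  proof -
    have "ennreal (\<bar>my - ms\<bar> powr qq) * emeasure M (Qc y u) = ennreal (\<bar>my - ms\<bar> powr qq * \<mu>)"
      by (simp add: \<mu>_def emeasure_Qc ennreal_mult)
    also have "\<dots> \<le> ennreal ((2 * B * Kc) powr qq * X powr (1 - e*qq))" using D2 by (rule ennreal_leI)
    finally show ?thesis using Iy by (intro mult_left_mono add_mono) auto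
  qed
  also have "\<dots> = ennreal (2 powr qq * (A powr qq + (2 * B * Kc) powr qq) * X powr (1 - e*qq))"
    by (simp add: ennreal_mult[symmetric] ennreal_plus[symmetric] algebra_simps del: ennreal_plus)
  finally show ?thesis by (simp add: ms_def X_def Kc_def)
qed

end


context setting begin

lemma cube_main:
  assumes li: "locally_integrable M f" and q: "qq \<ge> 1" and e0: "e \<ge> 0" and eq: "e * qq \<le> 1"
    and A: "A \<ge> 0" and B: "B \<ge> 0"
    and HA: "\<forall>Q'\<in>cubes_pos M. ennreal (measure M (cube_set (dilate k' Q')) powr (e - 1/qq)) *
       enn_powr (\<integral>\<^sup>+x. ennreal (\<bar>f x - mean M f (star M Q')\<bar> powr qq) * indicator (cube_set Q') x \<partial>M) (1/qq)
       \<le> ennreal A"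
    and HB: "HBprop M n e f B"
    and k: "k > 1" and kk: "k \<le> k'" and t: "k' - 1 \<le> (k - 1) * 2^t"
    and Q: "Some (z, l) \<in> cubes_pos M"
  shows "ennreal (measure M (Qc z (k*l)) powr (e - 1/qq)) *
     enn_powr (\<integral>\<^sup>+x. ennreal (\<bar>f x - mean M f (star M (Some (z, l)))\<bar> powr qq) * indicator (Qc z l) x \<partial>M) (1/qq)
     \<le> ennreal (4 * (2^t)^DIM('a) * (A + 2 * B * (1 + C0 * 8 powr n * (real t + 32))))"
proof -
  define Kc where "Kc = 1 + C0 * 8 powr n * (real t + 32)"
  have Kc: "Kc \<ge> 1" using C0_pos by (simp add: Kc_def)
  have l: "l > 0" using Q by (simp add: cubes_pos_Some)
  define u where "u = l / 2^t"
  have u: "u > 0" using l by (simp add: u_def)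
  have lu: "2^t * u = l" by (simp add: u_def)
  obtain G where G: "finite G" "card G \<le> (2^t)^DIM('a)"
    "\<And>y b. y \<in> G \<Longrightarrow> b \<in> Basis \<Longrightarrow> \<bar>(y - z) \<bullet> b\<bar> \<le> l/2 - (l/2^t)/2"
    "Qc z l \<subseteq> (\<Union>y\<in>G. Qc y (l/2^t))"
    using grid[OF l, where z=z and t=t] by blast
  define X where "X = measure M (Qc z (k*l))"
  have X: "X > 0"
  proof -
    have "Qc z l \<subseteq> Qc z (k*l)" using k l by (intro Qc_mono) auto
    then have "measure M (Qc z l) \<le> X" by (simp add: X_def measure_Qc_mono)
    then show ?thesis using measure_pos[OF Q] by simp
  qed
  define ms where "ms = mean M f (star M (Some (z, l)))"
  define h where "h x = ennreal (\<bar>f x - ms\<bar> powr qq)" for x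
  define Py where "Py = 2 powr qq * (A powr qq + (2 * B * Kc) powr qq) * X powr (1 - e*qq)"
  have Py: "Py \<ge> 0" by (simp add: Py_def)
  have fm: "f \<in> borel_measurable M" by (rule li_measurable[OF sets_M li])
  have piece: "(\<integral>\<^sup>+x. h x * indicator (Qc y u) x \<partial>M) \<le> ennreal Py" if y: "y \<in> G" for y
  proof -
    have Qz: "Some (z, 2^t*u) \<in> cubes_pos M" using Q by (simp add: lu)
    have near: "\<bar>(y - z) \<bullet> b\<bar> \<le> 2^t*u/2 - u/2" if "b \<in> Basis" for b
      using G(3)[OF y that] by (simp add: lu u_def)
    have sub: "Qc y (k'*u) \<subseteq> Qc z (k * (2^t*u))"
    proof (rule Qc_subset)
      fix b :: 'a assume b: "b \<in> Basis"
      have "(k' - 1) * u \<le> (k - 1) * 2^t * u" using t u by (intro mult_right_mono) auto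
      then have "u/2 * k' - u/2 \<le> (k - 1) * (2^t*u)/2" by (simp add: algebra_simps)
      then show "\<bar>(y - z) \<bullet> b\<bar> + k'*u/2 \<le> k * (2^t*u)/2"
        using near[OF b] by (simp add: algebra_simps)
    qed
    have "(\<integral>\<^sup>+x. ennreal (\<bar>f x - mean M f (star M (Some (z, 2^t*u)))\<bar> powr qq) * indicator (Qc y u) x \<partial>M)
      \<le> ennreal (2 powr qq * (A powr qq + (2 * B * (1 + C0 * 8 powr n * (real t + 32))) powr qq)
          * measure M (Qc z (k * (2^t*u))) powr (1 - e*qq))"
      using k kk by (intro cube_piece[OF li q e0 eq A B HA HB u Qz near sub]) auto
    then show ?thesis by (simp add: lu h_def ms_def Py_def X_def Kc_def)
  qed
  have "(\<integral>\<^sup>+x. h x * indicator (Qc z l) x \<partial>M) \<le> (\<integral>\<^sup>+x. (\<Sum>y\<in>G. h x * indicator (Qc y u) x) \<partial>M)"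
  proof (intro nn_integral_mono)
    fix x
    show "h x * indicator (Qc z l) x \<le> (\<Sum>y\<in>G. h x * indicator (Qc y u) x)"
    proof (cases "x \<in> Qc z l")
      case True
      then obtain y where y: "y \<in> G" "x \<in> Qc y u" using G(4) by (auto simp: u_def)
      have "h x * indicator (Qc z l) x = h x * indicator (Qc y u) x" using True y by simp
      also have "\<dots> \<le> (\<Sum>y\<in>G. h x * indicator (Qc y u) x)" using y G(1) by (intro member_le_sum) auto
      finally show ?thesis .
    qed simp
  qed
  also have "\<dots> = (\<Sum>y\<in>G. \<integral>\<^sup>+x. h x * indicator (Qc y u) x \<partial>M)"
    using fm by (intro nn_integral_sum) (simp add: h_def)
  also have "\<dots> \<le> (\<Sum>y\<in>G. ennreal Py)" using piece by (intro sum_mono) auto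
  also have "\<dots> = ennreal (real (card G) * Py)" using Py by (simp add: ennreal_mult ennreal_of_nat_eq_real_of_nat)
  finally have I: "(\<integral>\<^sup>+x. h x * indicator (Qc z l) x \<partial>M) \<le> ennreal (real (card G) * Py)" .
  have "ennreal (X powr (e - 1/qq)) * enn_powr (\<integral>\<^sup>+x. h x * indicator (Qc z l) x \<partial>M) (1/qq)
      \<le> ennreal (X powr (e - 1/qq) * (real (card G) * Py) powr (1/qq))"
    using Py by (intro to_goal[OF X _ q I]) auto
  also have "X powr (e - 1/qq) * (real (card G) * Py) powr (1/qq) \<le> 4 * (2^t)^DIM('a) * (A + 2 * B * Kc)"
  proof -
    have eqP: "real (card G) * Py = real (card G) * 2 powr qq * (A powr qq + (2 * B * Kc) powr qq) * X powr (1 - e*qq)"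
      by (simp add: Py_def mult.assoc)
    have cg: "real (card G) \<le> (2^t)^DIM('a)" using G(2) by (metis of_nat_le_iff of_nat_numeral of_nat_power)
    have C: "2 * B * Kc \<ge> 0" using B Kc by simp
    have Nd: "(1::real) \<le> (2^t)^DIM('a)" by simp
    show ?thesis unfolding eqP by (rule final_real[OF X q A C _ cg Nd]) simp
  qed
  finally show ?thesis by (simp add: h_def ms_def X_def Kc_def ennreal_leI order_trans)
qed

end


lemma div_le_ennreal:
  assumes "x \<le> ennreal C * y" "C \<ge> 1"
  shows "x / ennreal C \<le> y"
proof -
  have "x / ennreal C \<le> (y * ennreal C) / ennreal C"
    using assms by (intro divide_right_mono_ennreal) (simp add: mult.commute)
  also have "\<dots> = y" using assms by (intro mult_divide_eq_ennreal) auto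
  finally show ?thesis .
qed

lemma le_mult_ennreal: "C \<ge> 1 \<Longrightarrow> (x::ennreal) \<le> ennreal C * x"
proof -
  assume "C \<ge> 1"
  then have "1 * x \<le> ennreal C * x" by (intro mult_right_mono) auto
  then show ?thesis by simp
qed

context setting begin

lemma measure_dilate_pos:
  assumes Q: "Q \<in> cubes_pos M" and k: "k \<ge> 1"
  shows "measure M (cube_set (dilate k Q)) > 0"
proof (cases Q)
  case None
  then have "emeasure M UNIV < \<infinity>" "emeasure M UNIV > 0" using Q by (auto simp: cubes_pos_def cube_set_def)
  then show ?thesis using None by (simp add: dilate_def cube_set_def measure_def enn2real_positive_iff)
next
  case (Some cb)
  then obtain c b where cb: "Q = Some (c,b)" by (cases cb) auto
  have b: "b > 0" using Q cb by (simp add: cubes_pos_Some)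
  have "measure M (Qc c b) \<le> measure M (Qc c (k*b))" using k b by (intro measure_Qc_mono Qc_mono) auto
  then show ?thesis using measure_pos[of c b] Q cb by (simp add: cube_set_dilate)
qed

lemma measure_dilate_mono:
  assumes Q: "Q \<in> cubes_pos M" and k: "k \<le> k'"
  shows "measure M (cube_set (dilate k Q)) \<le> measure M (cube_set (dilate k' Q))"
proof (cases Q)
  case None then show ?thesis by (simp add: dilate_def)
next
  case (Some cb)
  then obtain c b where cb: "Q = Some (c,b)" by (cases cb) auto
  have b: "b > 0" using Q cb by (simp add: cubes_pos_Some)
  show ?thesis using k b cb by (simp add: cube_set_dilate) (intro measure_Qc_mono Qc_mono, simp add: mult_right_mono)
qed

lemma Cnorm_mono:
  assumes k: "1 \<le> k" "k \<le> k'" and ex: "einv p - einv q \<le> 0"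
  shows "Cnorm M n p q k' f \<le> Cnorm M n p q k f"
proof -
  have le: "ennreal (measure M (cube_set (dilate k' Q)) powr (einv p - einv q)) * L
         \<le> ennreal (measure M (cube_set (dilate k Q)) powr (einv p - einv q)) * L"
    if Q: "Q \<in> cubes_pos M" for Q L
  proof -
    have pos: "measure M (cube_set (dilate k Q)) > 0" by (rule measure_dilate_pos[OF Q k(1)])
    have "measure M (cube_set (dilate k' Q)) powr (einv p - einv q) \<le> measure M (cube_set (dilate k Q)) powr (einv p - einv q)"
      using ex pos measure_dilate_mono[OF Q k(2)] by (intro powr_mono2') auto
    then show ?thesis by (intro mult_right_mono ennreal_leI) auto
  qed
  show ?thesis unfolding Cnorm_def by (intro add_right_mono SUP_mono) (blast intro: le)
qed

lemma Cnorm_eq: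
  assumes k: "1 \<le> k" "1 \<le> k'" and ex: "einv p - einv q = 0"
  shows "Cnorm M n p q k' f = Cnorm M n p q k f"
proof -
  have "ennreal (measure M (cube_set (dilate k' Q)) powr (einv p - einv q)) =
        ennreal (measure M (cube_set (dilate k Q)) powr (einv p - einv q))" if "Q \<in> cubes_pos M" for Q
    using measure_dilate_pos[OF that k(1)] measure_dilate_pos[OF that k(2)] ex by simp
  then show ?thesis unfolding Cnorm_def by (intro arg_cong2[where f="(+)"] SUP_cong) auto
qed

end


context setting begin

lemma Cnorm_hard:
  assumes k: "1 < k" "k \<le> k'" and q1: "1 \<le> q" and qp: "q \<le> p" and qi: "q \<noteq> \<infinity>"
  shows "\<exists>C\<ge>1. \<forall>f. locally_integrable M f \<longrightarrow> Cnorm M n p q k f \<le> ennreal C * Cnorm M n p q k' f"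
proof -
  define qq where "qq = real_of_ereal q"
  have qeq: "q = ereal qq" using q1 qi by (cases q) (auto simp: qq_def)
  have q: "qq \<ge> 1" using q1 qeq by simp
  define e where "e = einv p"
  have einvq: "einv q = 1/qq" using qi by (simp add: einv_def qq_def)
  have e0: "e \<ge> 0"
  proof (cases "p = \<infinity>")
    case True then show ?thesis by (simp add: e_def einv_def)
  next
    case False
    then have "p = ereal (real_of_ereal p)" using qp q1 by (cases p) auto
    moreover have "real_of_ereal p \<ge> 0"
    proof -
      have p1: "1 \<le> p" using q1 qp by (rule order_trans)
      then show ?thesis using False by (cases p) auto
    qed
    ultimately show ?thesis using False by (simp add: e_def einv_def)
  qed
  have eq: "e * qq \<le> 1"
  proof (cases "p = \<infinity>")
    case True then show ?thesis by (simp add: e_def einv_def)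
  next
    case False
    then obtain pr where pr: "p = ereal pr" using qp q1 by (cases p) auto
    have "qq \<le> pr" using qp qeq pr by simp
    then have "qq / pr \<le> 1" using q by (simp add: divide_le_eq)
    then show ?thesis using pr by (simp add: e_def einv_def)
  qed
  obtain t :: nat where t: "(k' - 1) / (k - 1) < 2^t" using real_arch_pow[of 2 "(k' - 1) / (k - 1)"] by auto
  have tt: "k' - 1 \<le> (k - 1) * 2^t" using t k by (simp add: divide_less_eq mult.commute)
  define Kc where "Kc = 1 + C0 * 8 powr n * (real t + 32)"
  have Kc: "Kc \<ge> 1" using C0_pos by (simp add: Kc_def)
  define Nd :: real where "Nd = (2^t)^DIM('a)"
  have Nd: "Nd \<ge> 1" by (simp add: Nd_def)
  define Cst where "Cst = 8 * Nd * Kc + 1"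
  have Cst: "Cst \<ge> 1" using Nd Kc by (simp add: Cst_def)
  show ?thesis
  proof (intro exI[of _ Cst] conjI allI impI Cst)
    fix f assume li: "locally_integrable M f"
    define T where "T kk Q = ennreal (measure M (cube_set (dilate kk Q)) powr (einv p - einv q)) *
          Lq_on M q (cube_set Q) (\<lambda>x. f x - mean M f (star M Q))" for kk Q
    define S2 where "S2 = (SUP QR\<in>{(Q, R). Q \<in> cubes_doubling M \<and> R \<in> cubes_doubling M \<and> cube_set Q \<subseteq> cube_set R}.
        ennreal (measure M (cube_set (fst QR)) powr einv p) *
        ennreal \<bar>mean M f (fst QR) - mean M f (snd QR)\<bar> / K_QR M n (fst QR) (snd QR))"
    have Cn: "Cnorm M n p q kk f = (SUP Q\<in>cubes_pos M. T kk Q) + S2" for kk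
      by (simp add: Cnorm_def T_def S2_def)
    show "Cnorm M n p q k f \<le> ennreal Cst * Cnorm M n p q k' f"
    proof (cases "Cnorm M n p q k' f = top")
      case True
      then show ?thesis using Cst by (simp add: ennreal_mult_top)
    next
      case False
      define S1 where "S1 = (SUP Q\<in>cubes_pos M. T k' Q)"
      have fin1: "S1 \<noteq> top" and fin2: "S2 \<noteq> top" using False by (auto simp: Cn S1_def)
      define A where "A = enn2real S1"
      define B where "B = enn2real S2"
      have SA: "S1 = ennreal A" using fin1 by (simp add: A_def less_top ennreal_enn2real)
      have SB: "S2 = ennreal B" using fin2 by (simp add: B_def less_top ennreal_enn2real)
      have A: "A \<ge> 0" and B: "B \<ge> 0" by (simp_all add: A_def B_def)
      have Lq: "Lq_on M q S g = enn_powr (\<integral>\<^sup>+x. ennreal (\<bar>g x\<bar> powr qq) * indicator S x \<partial>M) (1/qq)" for S g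
        using qi by (simp add: Lq_on_def qq_def)
      have HA: "\<forall>Q'\<in>cubes_pos M. ennreal (measure M (cube_set (dilate k' Q')) powr (e - 1/qq)) *
         enn_powr (\<integral>\<^sup>+x. ennreal (\<bar>f x - mean M f (star M Q')\<bar> powr qq) * indicator (cube_set Q') x \<partial>M) (1/qq)
         \<le> ennreal A"
      proof
        fix Q' assume Q': "Q' \<in> cubes_pos M"
        have "T k' Q' \<le> S1" unfolding S1_def using Q' by (rule SUP_upper)
        then show "ennreal (measure M (cube_set (dilate k' Q')) powr (e - 1/qq)) *
         enn_powr (\<integral>\<^sup>+x. ennreal (\<bar>f x - mean M f (star M Q')\<bar> powr qq) * indicator (cube_set Q') x \<partial>M) (1/qq)
         \<le> ennreal A"
          by (simp add: T_def Lq einvq e_def SA)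
      qed
      have HB: "HBprop M n e f B"
        unfolding HBprop_def
      proof (intro allI impI)
        fix Q R assume QR: "Q \<in> cubes_doubling M \<and> R \<in> cubes_doubling M \<and> cube_set Q \<subseteq> cube_set R"
        have "ennreal (measure M (cube_set (fst (Q,R))) powr einv p) *
          ennreal \<bar>mean M f (fst (Q,R)) - mean M f (snd (Q,R))\<bar> / K_QR M n (fst (Q,R)) (snd (Q,R)) \<le> S2"
          unfolding S2_def using QR by (intro SUP_upper) auto
        then show "ennreal (measure M (cube_set Q) powr e) * ennreal \<bar>mean M f Q - mean M f R\<bar> / K_QR M n Q R \<le> ennreal B"
          by (simp add: e_def SB)
      qed
      define Bd where "Bd = 4 * Nd * (A + 2 * B * Kc)"
      have S1k: "(SUP Q\<in>cubes_pos M. T k Q) \<le> ennreal Bd"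
      proof (rule SUP_least)
        fix Q assume Q: "Q \<in> cubes_pos M"
        show "T k Q \<le> ennreal Bd"
        proof (cases Q)
          case None
          have "T k Q = T k' Q" using None by (simp add: T_def dilate_def)
          also have "\<dots> \<le> S1" unfolding S1_def using Q by (rule SUP_upper)
          also have "A \<le> Bd" using A B Kc Nd by (simp add: Bd_def) (smt (verit) mult_nonneg_nonneg mult_le_cancel_right1)
          then have "S1 \<le> ennreal Bd" using SA by (simp add: ennreal_leI)
          finally show ?thesis .
        next
          case (Some cb)
          then obtain z l where zl: "Q = Some (z, l)" by (cases cb) auto
          have "ennreal (measure M (Qc z (k*l)) powr (e - 1/qq)) *
             enn_powr (\<integral>\<^sup>+x. ennreal (\<bar>f x - mean M f (star M (Some (z, l)))\<bar> powr qq) * indicator (Qc z l) x \<partial>M) (1/qq)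
             \<le> ennreal (4 * (2^t)^DIM('a) * (A + 2 * B * (1 + C0 * 8 powr n * (real t + 32))))"
            using Q zl by (intro cube_main[OF li q e0 eq A B HA HB k tt]) auto
          then show ?thesis by (simp add: T_def zl Lq einvq e_def cube_set_dilate cube_set_Some Bd_def Nd_def Kc_def)
        qed
      qed
      have "Cnorm M n p q k f \<le> ennreal Bd + ennreal B" unfolding Cn SB by (rule add_right_mono[OF S1k])
      also have "\<dots> = ennreal (Bd + B)" using A B Kc Nd by (simp add: Bd_def ennreal_plus)
      also have "Bd + B \<le> Cst * (A + B)"
      proof -
        have "4 * Nd * A \<le> 8 * Nd * Kc * A" using A Kc Nd by (intro mult_right_mono) auto
        moreover have "4 * Nd * (2 * B * Kc) + B \<le> 8 * Nd * Kc * B + B" by (simp add: algebra_simps)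
        ultimately show ?thesis using A B by (simp add: Bd_def Cst_def algebra_simps)
      qed
      then have "ennreal (Bd + B) \<le> ennreal Cst * (ennreal A + ennreal B)"
        using A B Cst by (simp add: ennreal_mult[symmetric] ennreal_plus[symmetric] ennreal_leI del: ennreal_plus)
      also have "ennreal A + ennreal B = Cnorm M n p q k' f" by (simp add: Cn S1_def[symmetric] SA SB)
      finally show ?thesis .
    qed
  qed
qed

end


lemma combine_norms:
  assumes "\<exists>C::real. C \<ge> 1 \<and> (\<forall>f. P f \<longrightarrow> N2 f / ennreal C \<le> N1 f \<and> N1 f \<le> ennreal C * N2 f)"
  shows "{f. P f \<and> N1 f < \<infinity>} = {f. P f \<and> N2 f < \<infinity>}
         \<and> (\<exists>C::real. C \<ge> 1 \<and> (\<forall>f. P f \<longrightarrow> N2 f / ennreal C \<le> N1 f \<and> N1 f \<le> ennreal C * N2 f))"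
proof
  obtain C :: real where C: "C \<ge> 1" "\<And>f. P f \<Longrightarrow> N2 f / ennreal C \<le> N1 f \<and> N1 f \<le> ennreal C * N2 f"
    using assms by blast
  have a: "N2 f < \<infinity>" if f: "P f" "N1 f < \<infinity>" for f
  proof (rule ccontr)
    assume "\<not> N2 f < \<infinity>"
    then have "N2 f = top" by (simp add: top_unique not_less)
    then have "N2 f / ennreal C = top" using C by (simp add: ennreal_divide_eq_top_iff)
    then show False using C(2)[OF f(1)] f(2) by (simp add: top_unique)
  qed
  have b: "N1 f < \<infinity>" if f: "P f" "N2 f < \<infinity>" for f
  proof -
    have "ennreal C * N2 f < \<infinity>" using f by (simp add: ennreal_mult_less_top)
    then show "N1 f < \<infinity>" using C(2)[OF f(1)] by (meson le_less_trans)
  qed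
  show "{f. P f \<and> N1 f < \<infinity>} = {f. P f \<and> N2 f < \<infinity>}" using a b by blast
  show "\<exists>C::real. C \<ge> 1 \<and> (\<forall>f. P f \<longrightarrow> N2 f / ennreal C \<le> N1 f \<and> N1 f \<le> ennreal C * N2 f)"
    by (rule assms)
qed

theorem mainTheorem3:
  fixes M :: "'a::euclidean_space measure"
    and C0 n :: real and p q :: ereal and k1 k2 :: real
  assumes sets_M: "sets M = sets borel"
    and radon: "\<And>K. compact K \<Longrightarrow> emeasure M K < \<infinity>"
    and C0_pos: "C0 > 0"
    and n_pos: "n > 0" and n_le: "n \<le> real DIM('a)"
    and growth: "\<And>x l. x \<in> support M \<Longrightarrow> l > 0 \<Longrightarrow> emeasure M (Qc x l) \<le> ennreal (C0 * l powr n)"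
    and q_ge: "1 \<le> q" and qp: "q \<le> p"
    and k1: "k1 > 1" and k2: "k2 > 1"
  shows "{f. locally_integrable M f \<and> Cnorm M n p q k1 f < \<infinity>}
           = {f. locally_integrable M f \<and> Cnorm M n p q k2 f < \<infinity>}
         \<and> (\<exists>C::real. C \<ge> 1 \<and> (\<forall>f. locally_integrable M f \<longrightarrow>
              Cnorm M n p q k2 f / ennreal C \<le> Cnorm M n p q k1 f
            \<and> Cnorm M n p q k1 f \<le> ennreal C * Cnorm M n p q k2 f))"
proof (rule combine_norms)
  interpret setting M C0 n
    by unfold_locales (use sets_M radon C0_pos n_pos n_le growth in auto)
  show "\<exists>C::real. C \<ge> 1 \<and> (\<forall>f. locally_integrable M f \<longrightarrow>
              Cnorm M n p q k2 f / ennreal C \<le> Cnorm M n p q k1 f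
            \<and> Cnorm M n p q k1 f \<le> ennreal C * Cnorm M n p q k2 f)"
  proof (cases "q = \<infinity>")
    case True
    then have "p = \<infinity>" using qp by (simp add: top_unique[unfolded top_ereal_def])
    then have ex: "einv p - einv q = 0" using True by (simp add: einv_def)
    have "Cnorm M n p q k2 f = Cnorm M n p q k1 f" for f
      using k1 k2 by (intro Cnorm_eq ex) auto
    then show ?thesis by (intro exI[of _ 1]) (auto simp: divide_ennreal_def)
  next
    case False
    have ex: "einv p - einv q \<le> 0"
    proof -
      obtain qq where qq: "q = ereal qq" using False q_ge by (cases q) auto
      have q1: "qq \<ge> 1" using q_ge qq by simp
      show ?thesis
      proof (cases "p = \<infinity>")
        case True then show ?thesis using qq q1 by (simp add: einv_def)
      next
        case False
        then obtain pr where pr: "p = ereal pr" using qp qq by (cases p) auto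
        have "qq \<le> pr" using qp qq pr by simp
        then have "1 / pr \<le> 1 / qq" using q1 by (intro divide_left_mono) auto
        then show ?thesis using pr qq by (simp add: einv_def)
      qed
    qed
    show ?thesis
    proof (cases "k1 \<le> k2")
      case True
      obtain C where C: "C \<ge> 1" "\<And>f. locally_integrable M f \<Longrightarrow> Cnorm M n p q k1 f \<le> ennreal C * Cnorm M n p q k2 f"
        using Cnorm_hard[OF k1 True q_ge qp False] by blast
      have mono: "Cnorm M n p q k2 f \<le> Cnorm M n p q k1 f" for f
        using k1 True ex by (intro Cnorm_mono) auto
      show ?thesis
      proof (intro exI[of _ C] conjI allI impI C(1))
        fix f assume li: "locally_integrable M f"
        have "Cnorm M n p q k2 f \<le> ennreal C * Cnorm M n p q k1 f"
          using mono[of f] le_mult_ennreal[OF C(1)] order_trans by blast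
        then show "Cnorm M n p q k2 f / ennreal C \<le> Cnorm M n p q k1 f" using C(1) by (rule div_le_ennreal)
        show "Cnorm M n p q k1 f \<le> ennreal C * Cnorm M n p q k2 f" by (rule C(2)[OF li])
      qed
    next
      case False2: False
      then have le: "k2 \<le> k1" by simp
      obtain C where C: "C \<ge> 1" "\<And>f. locally_integrable M f \<Longrightarrow> Cnorm M n p q k2 f \<le> ennreal C * Cnorm M n p q k1 f"
        using Cnorm_hard[OF k2 le q_ge qp False] by blast
      have mono: "Cnorm M n p q k1 f \<le> Cnorm M n p q k2 f" for f
        using k2 le ex by (intro Cnorm_mono) auto
      show ?thesis
      proof (intro exI[of _ C] conjI allI impI C(1))
        fix f assume li: "locally_integrable M f"
        show "Cnorm M n p q k2 f / ennreal C \<le> Cnorm M n p q k1 f"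
          using C(2)[OF li] C(1) by (rule div_le_ennreal)
        show "Cnorm M n p q k1 f \<le> ennreal C * Cnorm M n p q k2 f"
          using mono[of f] le_mult_ennreal[OF C(1)] order_trans by blast
      qed
    qed
  qed
qed


end
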